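(* Let $R$ be an integral domain with $\operatorname{char}(R)\nmid n$, and let $A=R[\mathbb{Z}/n\mathbb{Z}]\cong R[\sigma]/(\sigma^n-1)$. Equip $HH^*(A;A)$ with the Batalin–Vilkovisky structure induced by the canonical Frobenius form of the group ring. Then, as a BV-algebra, $$HH^*(A;A)\cong R[x,z]/(x^n-1,\,nz),\qquad \Delta(a)=0\ \text{ for all } a\in HH^*(A;A),$$ where $x\in HH^0(A;A)$ is the class of $\sigma$ (degree $0$) and $z\in HH^2(A;A)$ (degree $2$) is the class represented by the normalized Hochschild $2$-cocycle $(\sigma^i,\sigma^k)\mapsto -\sigma^{i+k-n}$ if $i+k\ge n$ and $0$ otherwise ($0\le i,k\le n-1$).
   Context: $HH^*(A;A)=\operatorname{Ext}^*_{A\otimes A^{op}}(A,A)$ with the cup product. The canonical Frobenius form on $R[G]$ ($G$ finite) is the symmetric nondegenerate bilinear form $\langle g,h\rangle=1$ if $g=h^{-1}$ and $0$ otherwise (equivalently $\langle a,b\rangle=\varepsilon(ab)$ where $\varepsilon$ picks the coefficient of the identity). For a symmetric algebra $A$ with such a form, the BV operator (Tradler) is induced on normalized Hochschild cochains by $\Delta:\operatorname{Hom}(\bar A^{\otimes m+1},A)\to \operatorname{Hom}(\bar A^{\otimes m},A)$, $\Delta(f)(a_1,\dots,a_m)=\sum_{j}\sum_{i=0}^{m}(-1)^{im}\langle 1, f(a_i,\dots,a_m,e_j,a_1,\dots,a_{i-1})\rangle e_j^\vee$, where $\{e_j\}$ is an $R$-basis of $A$ and $\{e_j^\vee\}$ the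 dual basis with respect to the form; this is the dual of the Connes operator. A BV-algebra is a graded commutative algebra with a degree $-1$ operator $\Delta$, $\Delta^2=0$, whose deviation from being a derivation, $\{a,b\}=-(-1)^{|a|}(\Delta(ab)-\Delta(a)b-(-1)^{|a|}a\Delta(b))$, is a Gerstenhaber bracket. *)

theory Defs
  imports Main
begin

text \<open>An element of A is represented by its coefficient function on the basis
sigma^0, ..., sigma^(n-1): a function nat => R vanishing at indices >= n.\<close>

definition gring :: "nat \<Rightarrow> (nat \<Rightarrow> 'r::comm_ring_1) set" where
  "gring n = {g. \<forall>k\<ge>n. g k = 0}"

definition sig :: "nat \<Rightarrow> nat \<Rightarrow> nat \<Rightarrow> 'r::comm_ring_1" where
  "sig n i = (\<lambda>k. if k = i mod n then 1 else 0)"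

definition gmult :: "nat \<Rightarrow> (nat \<Rightarrow> 'r::comm_ring_1) \<Rightarrow> (nat \<Rightarrow> 'r) \<Rightarrow> nat \<Rightarrow> 'r" where
  "gmult n g h = (\<lambda>k. if k < n then
      (\<Sum>i<n. \<Sum>j<n. if (i + j) mod n = k then g i * h j else 0) else 0)"

text \<open>A normalized m-cochain f : (A/R1)^{\<otimes>m} -> A is R-multilinear, hence determined by
its values on basis tuples (sigma^(k_1), ..., sigma^(k_m)) with 1 <= k_j <= n-1
(normalization: f vanishes as soon as an argument is sigma^0 = 1).  We represent it by
f :: nat list => (nat => R), f ks = value on the tuple of basis elements with exponents ks,
with value 0 on lists that are not such tuples (in particular on lists containing 0).\<close>

definition valid_idx :: "nat \<Rightarrow> nat \<Rightarrow> nat list \<Rightarrow> bool" where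
  "valid_idx n m ks \<longleftrightarrow> length ks = m \<and> set ks \<subseteq> {1..<n}"

definition cochains :: "nat \<Rightarrow> nat \<Rightarrow> (nat list \<Rightarrow> nat \<Rightarrow> 'r::comm_ring_1) set" where
  "cochains n m = {f. (\<forall>ks. f ks \<in> gring n) \<and> (\<forall>ks. \<not> valid_idx n m ks \<longrightarrow> f ks = (\<lambda>_. 0))}"

definition gscale :: "'r::comm_ring_1 \<Rightarrow> (nat \<Rightarrow> 'r) \<Rightarrow> nat \<Rightarrow> 'r" where
  "gscale c g = (\<lambda>k. c * g k)"

text \<open>Hochschild differential d : C^m -> C^(m+1):
 (df)(a_1,...,a_(m+1)) = a_1 f(a_2,...,a_(m+1))
    + sum_(i=1)^m (-1)^i f(a_1,...,a_i a_(i+1),...,a_(m+1))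
    + (-1)^(m+1) f(a_1,...,a_m) a_(m+1).
 The product of basis elements sigma^a sigma^b is sigma^((a+b) mod n); if it equals
 sigma^0 the term vanishes by normalization (f is 0 on lists containing 0).\<close>
definition hdiff :: "nat \<Rightarrow> nat \<Rightarrow> (nat list \<Rightarrow> nat \<Rightarrow> 'r::comm_ring_1) \<Rightarrow> nat list \<Rightarrow> nat \<Rightarrow> 'r" where
  "hdiff n m f = (\<lambda>ks. if valid_idx n (Suc m) ks then
      (\<lambda>t. gmult n (sig n (hd ks)) (f (tl ks)) t
         + (\<Sum>i\<in>{1..m}. (-1) ^ i *
              f (take (i - 1) ks @ [(ks ! (i - 1) + ks ! i) mod n] @ drop (i + 1) ks) t)
         + (-1) ^ (Suc m) * gmult n (f (butlast ks)) (sig n (last ks)) t)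
    else (\<lambda>_. 0))"

definition cocycles :: "nat \<Rightarrow> nat \<Rightarrow> (nat list \<Rightarrow> nat \<Rightarrow> 'r::comm_ring_1) set" where
  "cocycles n m = {f \<in> cochains n m. hdiff n m f = (\<lambda>_ _. 0)}"

definition coboundaries :: "nat \<Rightarrow> nat \<Rightarrow> (nat list \<Rightarrow> nat \<Rightarrow> 'r::comm_ring_1) set" where
  "coboundaries n m = (if m = 0 then {(\<lambda>_ _. 0)}
      else {f. \<exists>g \<in> cochains n (m - 1). f = hdiff n (m - 1) g})"

definition cminus :: "(nat list \<Rightarrow> nat \<Rightarrow> 'r::comm_ring_1) \<Rightarrow> (nat list \<Rightarrow> nat \<Rightarrow> 'r) \<Rightarrow> nat list \<Rightarrow> nat \<Rightarrow> 'r" where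
  "cminus f g = (\<lambda>ks t. f ks t - g ks t)"

definition cup :: "nat \<Rightarrow> nat \<Rightarrow> nat \<Rightarrow> (nat list \<Rightarrow> nat \<Rightarrow> 'r::comm_ring_1) \<Rightarrow> (nat list \<Rightarrow> nat \<Rightarrow> 'r) \<Rightarrow> nat list \<Rightarrow> nat \<Rightarrow> 'r" where
  "cup n p q f g = (\<lambda>ks. if length ks = p + q
      then gmult n (f (take p ks)) (g (drop p ks)) else (\<lambda>_. 0))"

text \<open>Delta : C^(m+1) -> C^m,
 Delta(f)(a_1..a_m) = sum_j sum_(i=1)^(m+1) (-1)^(i m) <1, f(a_i..a_m, e_j, a_1..a_(i-1))> e_j^dual,
 with basis e_j = sigma^j (j < n), dual basis e_j^dual = sigma^(n-j) = sigma^(-j), and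
 <1, g> = eps(g) = coefficient of sigma^0 in g.\<close>
definition bv_delta :: "nat \<Rightarrow> nat \<Rightarrow> (nat list \<Rightarrow> nat \<Rightarrow> 'r::comm_ring_1) \<Rightarrow> nat list \<Rightarrow> nat \<Rightarrow> 'r" where
  "bv_delta n m f = (\<lambda>ks. if valid_idx n m ks then
      (\<lambda>t. \<Sum>j<n. \<Sum>i\<in>{1..Suc m}.
          (-1) ^ (i * m) * f (drop (i - 1) ks @ [j] @ take (i - 1) ks) 0 * sig n (n - j) t)
    else (\<lambda>_. 0))"

definition unit_cochain :: "nat \<Rightarrow> nat list \<Rightarrow> nat \<Rightarrow> 'r::comm_ring_1" where
  "unit_cochain n = (\<lambda>ks. if ks = [] then sig n 0 else (\<lambda>_. 0))"

definition x_cochain :: "nat \<Rightarrow> nat list \<Rightarrow> nat \<Rightarrow> 'r::comm_ring_1" where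
  "x_cochain n = (\<lambda>ks. if ks = [] then sig n 1 else (\<lambda>_. 0))"

definition z_cochain :: "nat \<Rightarrow> nat list \<Rightarrow> nat \<Rightarrow> 'r::comm_ring_1" where
  "z_cochain n = (\<lambda>ks. if valid_idx n 2 ks \<and> ks ! 0 + ks ! 1 \<ge> n
      then (\<lambda>t. - sig n (ks ! 0 + ks ! 1 - n) t) else (\<lambda>_. 0))"

primrec xpow :: "nat \<Rightarrow> nat \<Rightarrow> nat list \<Rightarrow> nat \<Rightarrow> 'r::comm_ring_1" where
  "xpow n 0 = unit_cochain n"
| "xpow n (Suc i) = cup n 0 0 (x_cochain n) (xpow n i)"

primrec zpow :: "nat \<Rightarrow> nat \<Rightarrow> nat list \<Rightarrow> nat \<Rightarrow> 'r::comm_ring_1" where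
  "zpow n 0 = unit_cochain n"
| "zpow n (Suc k) = cup n 2 (2 * k) (z_cochain n) (zpow n k)"

definition monom :: "nat \<Rightarrow> nat \<Rightarrow> nat \<Rightarrow> nat list \<Rightarrow> nat \<Rightarrow> 'r::comm_ring_1" where
  "monom n i k = cup n 0 (2 * k) (xpow n i) (zpow n k)"

definition lincomb :: "nat \<Rightarrow> nat \<Rightarrow> (nat \<Rightarrow> 'r::comm_ring_1) \<Rightarrow> nat list \<Rightarrow> nat \<Rightarrow> 'r" where
  "lincomb n k c = (\<lambda>ks t. \<Sum>i<n. c i * monom n i k ks t)"

end

theory Submission
  imports Defs
begin

definition gC :: "nat \<Rightarrow> nat \<Rightarrow> (nat list \<Rightarrow> 'r::comm_ring_1) set" where
  "gC n m = {\<psi>. \<forall>ks. \<not> valid_idx n m ks \<longrightarrow> \<psi> ks = 0}"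

definition mrg :: "nat \<Rightarrow> nat list \<Rightarrow> nat \<Rightarrow> nat list" where
  "mrg n ks i = take (i - 1) ks @ [(ks ! (i - 1) + ks ! i) mod n] @ drop (i + 1) ks"

definition rd :: "nat \<Rightarrow> nat \<Rightarrow> (nat list \<Rightarrow> 'r::comm_ring_1) \<Rightarrow> nat list \<Rightarrow> 'r" where
  "rd n m \<psi> ks = \<psi> (tl ks) + (\<Sum>i\<in>{1..m}. (-1) ^ i * \<psi> (mrg n ks i))
      + (-1) ^ (Suc m) * \<psi> (butlast ks)"

definition gd :: "nat \<Rightarrow> nat \<Rightarrow> (nat list \<Rightarrow> 'r::comm_ring_1) \<Rightarrow> nat list \<Rightarrow> 'r" where
  "gd n m \<psi> ks = (if valid_idx n (Suc m) ks then rd n m \<psi> ks else 0)"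

lemma mrg_Cons1: "ys \<noteq> [] \<Longrightarrow> mrg n (x # ys) (Suc 0) = ((x + hd ys) mod n) # tl ys"
  by (cases ys) (auto simp: mrg_def)

lemma mrg_Cons: "i \<ge> 1 \<Longrightarrow> mrg n (x # ys) (Suc i) = x # mrg n ys i"
  by (cases i) (auto simp: mrg_def)

lemma rd_Cons:
  assumes "length ys = Suc m"
  shows "rd n (Suc m) \<psi> (x # ys) = \<psi> ys - \<psi> (((x + hd ys) mod n) # tl ys)
           - rd n m (\<lambda>l. \<psi> (x # l)) ys + \<psi> (x # tl ys)"
proof -
  have ys: "ys \<noteq> []" using assms by auto
  have s0: "(\<Sum>i\<in>{1..Suc m}. f i) = f 1 + (\<Sum>i\<in>{1..m}. f (Suc i))" for f :: "nat \<Rightarrow> 'a"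
    by (subst sum.atLeast_Suc_atMost, simp, subst sum.shift_bounds_cl_Suc_ivl[symmetric], simp)
  have s: "(\<Sum>i\<in>{1..Suc m}. (-1) ^ i * \<psi> (mrg n (x # ys) i))
      = - \<psi> (((x + hd ys) mod n) # tl ys) - (\<Sum>i\<in>{1..m}. (-1) ^ i * \<psi> (x # mrg n ys i))"
    unfolding s0 using ys
    by (simp add: mrg_Cons1 mrg_Cons sum_negf)
  have b: "butlast (x # ys) = x # butlast ys" using ys by simp
  show ?thesis unfolding rd_def s b using ys by (simp add: algebra_simps)
qed

lemma gCD: "\<psi> \<in> gC n m \<Longrightarrow> \<not> valid_idx n m ks \<Longrightarrow> \<psi> ks = 0"
  by (simp add: gC_def)

lemma gCI: "(\<And>ks. \<not> valid_idx n m ks \<Longrightarrow> \<psi> ks = 0) \<Longrightarrow> \<psi> \<in> gC n m"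
  by (simp add: gC_def)

lemma gC_zero: "\<psi> \<in> gC n m \<Longrightarrow> 0 \<in> set l \<Longrightarrow> \<psi> l = 0"
  by (erule gCD) (auto simp: valid_idx_def)

lemma gC_ge: "\<psi> \<in> gC n m \<Longrightarrow> x \<in> set l \<Longrightarrow> x \<ge> n \<Longrightarrow> \<psi> l = 0"
  by (erule gCD) (auto simp: valid_idx_def)

lemma slice_gC: "\<psi> \<in> gC n (Suc m) \<Longrightarrow> (\<lambda>l. \<psi> (x # l)) \<in> gC n m"
  by (rule gCI, erule gCD) (auto simp: valid_idx_def)

lemma rd_zero[simp]: "rd n m (\<lambda>l. 0) ks = 0"
  by (simp add: rd_def)

lemma gd_zero[simp]: "gd n m (\<lambda>l. 0) ks = 0"
  by (simp add: gd_def)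

lemma rd0_single: "length ks = Suc 0 \<Longrightarrow> rd n 0 \<psi> ks = 0"
  by (cases ks) (auto simp: rd_def)

lemma gd0[simp]: "gd n 0 \<psi> ks = 0"
  by (auto simp: gd_def valid_idx_def rd0_single)

lemma gd_gC: "gd n m \<psi> \<in> gC n (Suc m)"
  by (rule gCI) (simp add: gd_def)

lemma rd_gd:
  assumes "\<psi> \<in> gC n m" "length ks = Suc m" "set ks \<subseteq> {..<n}"
  shows "rd n m \<psi> ks = gd n m \<psi> ks"
  using assms
proof (induction m arbitrary: \<psi> ks)
  case 0
  then show ?case by (simp add: rd0_single)
next
  case (Suc m)
  then obtain x ys where ks: "ks = x # ys" and ly: "length ys = Suc m"
    by (cases ks) auto
  have xn: "x < n" and ysn: "set ys \<subseteq> {..<n}" using Suc.prems ks by auto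
  show ?case
  proof (cases "valid_idx n (Suc (Suc m)) ks")
    case True
    then show ?thesis by (simp add: gd_def)
  next
    case False
    have IH: "rd n m (\<lambda>l. \<psi> (x # l)) ys = gd n m (\<lambda>l. \<psi> (x # l)) ys"
      using Suc.IH[OF slice_gC[OF Suc.prems(1)] ly ysn] .
    obtain y zs where ys: "ys = y # zs" using ly by (cases ys) auto
    have yn: "y < n" using ysn ys by auto
    have inv: "x = 0 \<or> y = 0 \<or> 0 \<in> set zs"
      using False ks ys ly xn ysn by (auto simp: valid_idx_def subset_iff; metis One_nat_def Suc_leI gr0I)
    have "rd n (Suc m) \<psi> ks = \<psi> ys - \<psi> (((x + hd ys) mod n) # tl ys)
           - gd n m (\<lambda>l. \<psi> (x # l)) ys + \<psi> (x # tl ys)"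
      unfolding ks rd_Cons[OF ly] IH ..
    also have "\<dots> = 0"
    proof -
      have z: "\<psi> l = 0" if "0 \<in> set l" for l
        using gC_zero[OF Suc.prems(1)] that by auto
      consider "x = 0" | "x \<noteq> 0" "y = 0" | "x \<noteq> 0" "y \<noteq> 0" "0 \<in> set zs" using inv by blast
      then show ?thesis
      proof cases
        case 1
        have "(\<lambda>l. \<psi> (x # l)) = (\<lambda>l. 0)" using z 1 by auto
        then show ?thesis using 1 ys yn z by simp
      next
        case 2
        have "gd n m (\<lambda>l. \<psi> (x # l)) ys = 0" using 2 ys by (simp add: gd_def valid_idx_def)
        then show ?thesis using 2 ys xn z by simp
      next
        case 3
        have "gd n m (\<lambda>l. \<psi> (x # l)) ys = 0" using 3 ys by (auto simp: gd_def valid_idx_def)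
        then show ?thesis using 3 ys z by simp
      qed
    qed
    finally show ?thesis using False by (simp add: gd_def)
  qed
qed

lemma gd_Cons:
  assumes "\<psi> \<in> gC n (Suc m)" "x < n" "length ys = Suc m" "set ys \<subseteq> {..<n}"
  shows "gd n (Suc m) \<psi> (x # ys) = \<psi> ys - \<psi> (((x + hd ys) mod n) # tl ys)
           - gd n m (\<lambda>l. \<psi> (x # l)) ys + \<psi> (x # tl ys)"
proof -
  have "gd n (Suc m) \<psi> (x # ys) = rd n (Suc m) \<psi> (x # ys)"
    using rd_gd[OF assms(1)] assms by simp
  also have "\<dots> = \<psi> ys - \<psi> (((x + hd ys) mod n) # tl ys)
           - rd n m (\<lambda>l. \<psi> (x # l)) ys + \<psi> (x # tl ys)"
    by (rule rd_Cons[OF assms(3)])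
  also have "rd n m (\<lambda>l. \<psi> (x # l)) ys = gd n m (\<lambda>l. \<psi> (x # l)) ys"
    using rd_gd[OF slice_gC[OF assms(1)] assms(3,4)] .
  finally show ?thesis .
qed


lemma rd_add: "rd n m (\<lambda>l. f l + g l) ks = rd n m f ks + rd n m g ks"
  by (simp add: rd_def sum.distrib algebra_simps)

lemma rd_diff: "rd n m (\<lambda>l. f l - g l) ks = rd n m f ks - rd n m g ks"
  by (simp add: rd_def sum_subtractf algebra_simps)

lemma rd_scale: "rd n m (\<lambda>l. c * f l) ks = c * rd n m f ks"
  by (simp add: rd_def sum_distrib_left algebra_simps)

lemma rd_sum: "rd n m (\<lambda>l. \<Sum>x\<in>A. f x l) ks = (\<Sum>x\<in>A. rd n m (f x) ks)"
  unfolding rd_def sum_subtractf sum.distrib sum_distrib_left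
  by (simp add: sum.swap[of _ A] sum_distrib_left)

lemma gd_add: "gd n m (\<lambda>l. f l + g l) ks = gd n m f ks + gd n m g ks"
  by (simp add: gd_def rd_add)

lemma gd_diff: "gd n m (\<lambda>l. f l - g l) ks = gd n m f ks - gd n m g ks"
  by (simp add: gd_def rd_diff)

lemma gd_scale: "gd n m (\<lambda>l. c * f l) ks = c * gd n m f ks"
  by (simp add: gd_def rd_scale)

lemma gd_sum: "gd n m (\<lambda>l. \<Sum>x\<in>A. f x l) ks = (\<Sum>x\<in>A. gd n m (f x) ks)"
  by (simp add: gd_def rd_sum)

lemma gd_cong: "(\<And>l. f l = g l) \<Longrightarrow> gd n m f ks = gd n m g ks"
  by (metis ext)

lemma mod_add_cancel_aux: "(x + a) mod n = (y + a) mod (n::nat) \<Longrightarrow> x mod n = y mod n"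
  by (simp add: nat_mod_eq_iff)

lemma sum_shift_mod: "(\<Sum>x<n. f ((x + a) mod n)) = (\<Sum>x<(n::nat). f x)"
proof (cases "n = 0")
  case True then show ?thesis by simp
next
  case False
  have inj: "inj_on (\<lambda>x. (x + a) mod n) {..<n}"
    by (rule inj_onI) (metis mod_add_cancel_aux mod_less lessThan_iff)
  have im: "(\<lambda>x. (x + a) mod n) ` {..<n} = {..<n}"
    by (rule endo_inj_surj) (use False inj in auto)
  show ?thesis
    using sum.reindex[OF inj, of f] im by simp
qed


definition tsum :: "nat \<Rightarrow> nat \<Rightarrow> (nat list \<Rightarrow> 'r::comm_ring_1) \<Rightarrow> nat list \<Rightarrow> 'r" where
  "tsum n m \<eta> ks = (if valid_idx n m ks then (\<Sum>x<n. \<eta> (x # ks)) else 0)"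

lemma valid_idxD:
  assumes "valid_idx n m ks"
  shows "length ks = m" "set ks \<subseteq> {..<n}" "0 \<notin> set ks"
  using assms by (auto simp: valid_idx_def)

lemma tsum_gC: "tsum n m \<eta> \<in> gC n m"
  by (rule gCI) (simp add: tsum_def)

lemma tsum_fun: "\<eta> \<in> gC n (Suc m) \<Longrightarrow> (\<lambda>l. \<Sum>x<n. \<eta> (x # l)) = tsum n m \<eta>"
proof
  fix l assume e: "\<eta> \<in> gC n (Suc m)"
  show "(\<Sum>x<n. \<eta> (x # l)) = tsum n m \<eta> l"
  proof (cases "valid_idx n m l")
    case True then show ?thesis by (simp add: tsum_def)
  next
    case False
    then have "\<not> valid_idx n (Suc m) (x # l)" for x by (auto simp: valid_idx_def)
    then show ?thesis using False gCD[OF e] by (simp add: tsum_def)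
  qed
qed

lemma tsum_gd:
  assumes e: "\<eta> \<in> gC n (Suc m)"
  shows "tsum n (Suc m) (gd n (Suc m) \<eta>) ks + gd n m (tsum n m \<eta>) ks = of_nat n * \<eta> ks"
proof (cases "valid_idx n (Suc m) ks")
  case False
  then show ?thesis using gCD[OF e False] by (simp add: tsum_def gd_def)
next
  case True
  note v = valid_idxD[OF True]
  have hn: "hd ks < n" using v by (cases ks) auto
  have "tsum n (Suc m) (gd n (Suc m) \<eta>) ks = (\<Sum>x<n. gd n (Suc m) \<eta> (x # ks))"
    using True by (simp add: tsum_def)
  also have "\<dots> = (\<Sum>x<n. \<eta> ks - \<eta> (((x + hd ks) mod n) # tl ks)
           - gd n m (\<lambda>l. \<eta> (x # l)) ks + \<eta> (x # tl ks))"
    by (rule sum.cong[OF refl], rule gd_Cons[OF e]) (use v in auto)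
  also have "\<dots> = of_nat n * \<eta> ks - (\<Sum>x<n. \<eta> (((x + hd ks) mod n) # tl ks))
       - (\<Sum>x<n. gd n m (\<lambda>l. \<eta> (x # l)) ks) + (\<Sum>x<n. \<eta> (x # tl ks))"
    by (simp add: sum.distrib sum_subtractf)
  also have "(\<Sum>x<n. \<eta> (((x + hd ks) mod n) # tl ks)) = (\<Sum>x<n. \<eta> (x # tl ks))"
    by (rule sum_shift_mod)
  also have "(\<Sum>x<n. gd n m (\<lambda>l. \<eta> (x # l)) ks) = gd n m (tsum n m \<eta>) ks"
    unfolding gd_sum[symmetric] tsum_fun[OF e] ..
  finally show ?thesis by simp
qed


definition jop :: "nat \<Rightarrow> nat \<Rightarrow> (nat list \<Rightarrow> 'r::comm_ring_1) \<Rightarrow> nat list \<Rightarrow> 'r" where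
  "jop n m \<xi> ks = (if valid_idx n m ks then (\<Sum>j<hd ks. \<xi> (j # tl ks)) else 0)"

definition ucup :: "nat \<Rightarrow> nat \<Rightarrow> (nat list \<Rightarrow> 'r::comm_ring_1) \<Rightarrow> nat list \<Rightarrow> 'r" where
  "ucup n m \<chi> ks = (if valid_idx n (Suc (Suc m)) ks \<and> n \<le> ks ! 0 + ks ! 1 then \<chi> (drop 2 ks) else 0)"

lemma jop_gC: "jop n m \<xi> \<in> gC n m"
  by (rule gCI) (simp add: jop_def)

lemma ucup_gC: "ucup n m \<chi> \<in> gC n (Suc (Suc m))"
  by (rule gCI) (simp add: ucup_def)

lemma sum_carry:
  fixes f :: "nat \<Rightarrow> 'a::comm_monoid_add"
  assumes "a0 < n" "a1 < n"
  shows "(\<Sum>j<a0. f ((j + a1) mod n)) + (\<Sum>j<a1. f j)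
       = (\<Sum>j<(a0 + a1) mod n. f j) + (if n \<le> a0 + a1 then (\<Sum>j<n. f j) else 0)"
  using assms(1)
proof (induction a0)
  case 0
  then show ?case using assms by simp
next
  case (Suc a)
  have IH: "(\<Sum>j<a. f ((j + a1) mod n)) + (\<Sum>j<a1. f j)
       = (\<Sum>j<(a + a1) mod n. f j) + (if n \<le> a + a1 then (\<Sum>j<n. f j) else 0)"
    using Suc by simp
  have L: "(\<Sum>j<Suc a. f ((j + a1) mod n)) + (\<Sum>j<a1. f j)
      = (\<Sum>j<a. f ((j + a1) mod n)) + (\<Sum>j<a1. f j) + f ((a + a1) mod n)"
    by (simp add: add_ac)
  consider "a + a1 + 1 < n" | "a + a1 + 1 = n" | "n \<le> a + a1" by linarith
  then show ?case
  proof cases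
    case 1
    then show ?thesis unfolding L IH by (simp add: add_ac)
  next
    case 2
    then have "(Suc a + a1) mod n = 0" by simp
    moreover have "(\<Sum>j<n. f j) = (\<Sum>j<a + a1. f j) + f (a + a1)" using 2 by (metis lessThan_Suc sum.lessThan_Suc Suc_eq_plus1)
    ultimately show ?thesis unfolding L IH using 2 by (simp add: add_ac)
  next
    case 3
    have e1: "(a + a1) mod n = a + a1 - n" using 3 Suc.prems assms by (simp add: le_mod_geq)
    have e2: "(Suc a + a1) mod n = Suc (a + a1 - n)" using 3 Suc.prems assms
    proof -
      have "(Suc a + a1) mod n = (Suc a + a1 - n) mod n" using 3 by (simp add: le_mod_geq)
      also have "\<dots> = Suc a + a1 - n" using 3 Suc.prems assms by (intro mod_less) linarith
      finally show ?thesis using 3 by simp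
    qed
    show ?thesis unfolding L IH e1 e2 using 3 by (simp add: add_ac)
  qed
qed

lemma arith_aux: "S1 + A1 = M + Uv \<Longrightarrow> c * x - (c * x - S1 - Y + Z) + (A1 - M - Y + Z) = (Uv::'a::comm_ring_1)"
  by (simp add: algebra_simps)

lemma sum_shift_Suc: "(\<Sum>x<n. f (Suc x mod n)) = (\<Sum>x<(n::nat). f x)"
proof -
  have e: "(\<Sum>x<n. f (Suc x mod n)) = (\<Sum>x<n. f ((x + 1) mod n))" by simp
  show ?thesis unfolding e by (rule sum_shift_mod)
qed

context
  fixes n m :: nat and \<phi> :: "nat list \<Rightarrow> 'r::comm_ring_1"
  assumes n2: "1 < n" and phiC: "\<phi> \<in> gC n (Suc (Suc m))"
    and cyc: "\<And>ks. gd n (Suc (Suc m)) \<phi> ks = 0"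
begin

definition "\<xi> = (\<lambda>l. \<phi> (1 # l))"

lemma xiC: "\<xi> \<in> gC n (Suc m)"
  unfolding \<xi>_def by (rule slice_gC[OF phiC])

lemma relR:
  assumes "a < n" "length w = Suc m" "set w \<subseteq> {..<n}"
  shows "gd n (Suc m) \<xi> (a # w) = \<phi> (a # w) - \<phi> (((1 + a) mod n) # w) + \<xi> w"
proof -
  have "gd n (Suc (Suc m)) \<phi> (1 # a # w) = \<phi> (a # w) - \<phi> (((1 + a) mod n) # w)
           - gd n (Suc m) \<xi> (a # w) + \<xi> w"
    unfolding \<xi>_def using gd_Cons[OF phiC, of 1 "a # w"] assms n2 by simp
  then show ?thesis using cyc by (simp add: algebra_simps)
qed

lemma tele:
  assumes "b < n" "length w = Suc m" "set w \<subseteq> {..<n}"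
  shows "\<phi> (b # w) = of_nat b * \<xi> w - (\<Sum>j<b. gd n (Suc m) \<xi> (j # w))"
  using assms(1)
proof (induction b)
  case 0
  then show ?case using gC_zero[OF phiC] by simp
next
  case (Suc b)
  have "gd n (Suc m) \<xi> (b # w) = \<phi> (b # w) - \<phi> (((1 + b) mod n) # w) + \<xi> w"
    by (rule relR) (use Suc assms in auto)
  moreover have "(1 + b) mod n = Suc b" using Suc by simp
  ultimately show ?case using Suc by (simp add: algebra_simps)
qed

lemma tsum_xi_cocycle: "gd n m (tsum n m \<xi>) ks = 0"
proof -
  have "tsum n (Suc m) (gd n (Suc m) \<xi>) ks = of_nat n * \<xi> ks"
  proof (cases "valid_idx n (Suc m) ks")
    case False then show ?thesis using gCD[OF xiC False] by (simp add: tsum_def)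
  next
    case True
    note v = valid_idxD[OF True]
    have "tsum n (Suc m) (gd n (Suc m) \<xi>) ks = (\<Sum>a<n. gd n (Suc m) \<xi> (a # ks))"
      using True by (simp add: tsum_def)
    also have "\<dots> = (\<Sum>a<n. \<phi> (a # ks) - \<phi> (((a + 1) mod n) # ks) + \<xi> ks)"
      by (rule sum.cong[OF refl]) (subst relR, use v in \<open>auto simp: add.commute\<close>)
    also have "\<dots> = of_nat n * \<xi> ks"
      by (simp add: sum.distrib sum_subtractf sum_shift_Suc[of "\<lambda>x. \<phi> (x # ks)"])
    finally show ?thesis .
  qed
  then show ?thesis using tsum_gd[OF xiC, of ks] by simp
qed


lemma decomp: "\<phi> ks + gd n (Suc m) (jop n (Suc m) \<xi>) ks = ucup n m (tsum n m \<xi>) ks"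
proof (cases "valid_idx n (Suc (Suc m)) ks")
  case False
  then show ?thesis using gCD[OF phiC False] by (simp add: ucup_def gd_def)
next
  case True
  note v = valid_idxD[OF True]
  obtain a0 a1 w where ks: "ks = a0 # a1 # w" and lw: "length w = m"
    using v(1) by (metis length_Suc_conv)
  have a0: "0 < a0" "a0 < n" and a1: "0 < a1" "a1 < n" and wv: "valid_idx n m w"
    using True ks by (auto simp: valid_idx_def)
  note wv' = valid_idxD[OF wv]
  let ?a = "a1 # w"
  have av: "valid_idx n (Suc m) ?a" using a1 wv lw by (auto simp: valid_idx_def)
  have la: "length ?a = Suc m" "set ?a \<subseteq> {..<n}" using valid_idxD[OF av] by auto
  have fj: "(\<lambda>l. jop n (Suc m) \<xi> (a0 # l)) = (\<lambda>l. \<Sum>j<a0. \<xi> (j # l))"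
  proof
    fix l
    show "jop n (Suc m) \<xi> (a0 # l) = (\<Sum>j<a0. \<xi> (j # l))"
    proof (cases "valid_idx n m l")
      case True then show ?thesis using a0 by (simp add: jop_def valid_idx_def)
    next
      case False
      then have nv: "\<not> valid_idx n (Suc m) (j # l)" for j by (auto simp: valid_idx_def)
      then have "jop n (Suc m) \<xi> (a0 # l) = 0" by (simp add: jop_def)
      moreover have "(\<Sum>j<a0. \<xi> (j # l)) = 0" using gCD[OF xiC nv] by simp
      ultimately show ?thesis by simp
    qed
  qed
  have G: "gd n (Suc m) (jop n (Suc m) \<xi>) ks
     = jop n (Suc m) \<xi> ?a - jop n (Suc m) \<xi> (((a0 + a1) mod n) # w)
       - (\<Sum>j<a0. gd n m (\<lambda>l. \<xi> (j # l)) ?a) + jop n (Suc m) \<xi> (a0 # w)"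
    unfolding ks by (subst gd_Cons[OF jop_gC]) (use a0 la in \<open>simp_all add: fj gd_sum\<close>)
  have j1: "jop n (Suc m) \<xi> ?a = (\<Sum>j<a1. \<xi> (j # w))" using av by (simp add: jop_def)
  have j2: "jop n (Suc m) \<xi> (((a0 + a1) mod n) # w) = (\<Sum>j<(a0 + a1) mod n. \<xi> (j # w))"
    using wv n2 by (cases "(a0 + a1) mod n = 0") (auto simp: jop_def valid_idx_def)
  have j3: "jop n (Suc m) \<xi> (a0 # w) = (\<Sum>j<a0. \<xi> (j # w))" using wv a0 by (simp add: jop_def valid_idx_def)
  have P: "\<phi> ks = of_nat a0 * \<xi> ?a - (\<Sum>j<a0. gd n (Suc m) \<xi> (j # ?a))"
    unfolding ks by (rule tele) (use a0 la in auto)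
  have Q: "(\<Sum>j<a0. gd n (Suc m) \<xi> (j # ?a)) = (\<Sum>j<a0. \<xi> ?a - \<xi> (((j + a1) mod n) # w)
        - gd n m (\<lambda>l. \<xi> (j # l)) ?a + \<xi> (j # w))"
    by (rule sum.cong[OF refl], subst gd_Cons[OF xiC]) (use a0 la in auto)
  have S: "(\<Sum>j<a0. \<xi> (((j + a1) mod n) # w)) + (\<Sum>j<a1. \<xi> (j # w))
       = (\<Sum>j<(a0 + a1) mod n. \<xi> (j # w)) + (if n \<le> a0 + a1 then (\<Sum>j<n. \<xi> (j # w)) else 0)"
    by (rule sum_carry[OF a0(2) a1(2)])
  have U: "ucup n m (tsum n m \<xi>) ks = (if n \<le> a0 + a1 then (\<Sum>j<n. \<xi> (j # w)) else 0)"
    using True wv ks by (simp add: ucup_def tsum_def)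
  show ?thesis
  proof -
    have E: "(\<Sum>j<a0. \<xi> ?a - \<xi> (((j + a1) mod n) # w) - gd n m (\<lambda>l. \<xi> (j # l)) ?a + \<xi> (j # w))
      = of_nat a0 * \<xi> ?a - (\<Sum>j<a0. \<xi> (((j + a1) mod n) # w))
        - (\<Sum>j<a0. gd n m (\<lambda>l. \<xi> (j # l)) ?a) + (\<Sum>j<a0. \<xi> (j # w))"
      by (simp add: sum.distrib sum_subtractf)
    show ?thesis unfolding G P Q j1 j2 j3 U E by (rule arith_aux[OF S])
  qed
qed

end


lemma mod_lt2: "a < 2 * n \<Longrightarrow> a mod n = (if a < n then a else a - (n::nat))"
  by (simp add: le_mod_geq)

lemma carry_nat:
  assumes "0 < x" "x < n" "0 < y" "y < n" "0 < z" "z < (n::nat)"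
  shows "(if n \<le> y + z then 1 else 0) + (if (y + z) mod n \<noteq> 0 \<and> n \<le> x + (y + z) mod n then 1 else 0)
       = (if (x + y) mod n \<noteq> 0 \<and> n \<le> (x + y) mod n + z then 1 else 0) + (if n \<le> x + y then 1 else (0::nat))"
  using assms by (auto simp: mod_lt2)

lemma carry_ring:
  assumes "0 < x" "x < n" "0 < y" "y < n" "0 < z" "z < (n::nat)"
  shows "(if n \<le> y + z then c else 0) - (if (x + y) mod n \<noteq> 0 \<and> n \<le> (x + y) mod n + z then c else 0)
     - ((if n \<le> x + z then c else 0) - (if (y + z) mod n \<noteq> 0 \<and> n \<le> x + (y + z) mod n then c else 0)
         - G + (if n \<le> x + y then c else 0)) + (if n \<le> x + z then c else 0) = (G::'a::comm_ring_1)"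
  using carry_nat[OF assms]
  by (cases "n \<le> y + z"; cases "(y + z) mod n \<noteq> 0 \<and> n \<le> x + (y + z) mod n";
      cases "(x + y) mod n \<noteq> 0 \<and> n \<le> (x + y) mod n + z"; cases "n \<le> x + y") auto

lemma ucup_gd:
  assumes chi: "\<chi> \<in> gC n m"
  shows "gd n (Suc (Suc m)) (ucup n m \<chi>) ks = ucup n (Suc m) (gd n m \<chi>) ks"
proof (cases "valid_idx n (Suc (Suc (Suc m))) ks")
  case False
  then show ?thesis by (simp add: gd_def ucup_def)
next
  case True
  obtain x y z v where ks: "ks = x # y # z # v" and lv: "length v = m"
    using valid_idxD(1)[OF True] by (metis length_Suc_conv)
  have x: "0 < x" "x < n" and y: "0 < y" "y < n" and z: "0 < z" "z < n" and vv: "valid_idx n m v"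
    using True ks by (auto simp: valid_idx_def)
  have zv: "valid_idx n (Suc m) (z # v)" using z vv by (auto simp: valid_idx_def)
  let ?U = "ucup n m \<chi>"
  have U1: "?U (a # b # v) = (if a \<noteq> 0 \<and> a < n \<and> b \<noteq> 0 \<and> b < n \<and> n \<le> a + b then \<chi> v else 0)" for a b
    using vv by (auto simp: ucup_def valid_idx_def)
  have sl: "(\<lambda>l. ?U (x # l)) \<in> gC n (Suc m)" by (rule slice_gC[OF ucup_gC])
  have sl2: "(\<lambda>l. ?U (x # y # l)) = (\<lambda>l. if n \<le> x + y then \<chi> l else 0)"
  proof
    fix l show "?U (x # y # l) = (if n \<le> x + y then \<chi> l else 0)"
      using gCD[OF chi] x y by (cases "valid_idx n m l") (auto simp: ucup_def valid_idx_def)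
  qed
  have "gd n (Suc (Suc m)) ?U ks = ?U (y # z # v) - ?U (((x + y) mod n) # z # v)
        - gd n (Suc m) (\<lambda>l. ?U (x # l)) (y # z # v) + ?U (x # z # v)"
    unfolding ks by (subst gd_Cons[OF ucup_gC]) (use x y z vv lv in \<open>auto simp: valid_idx_def\<close>)
  also have "gd n (Suc m) (\<lambda>l. ?U (x # l)) (y # z # v) = ?U (x # z # v) - ?U (x # ((y + z) mod n) # v)
        - gd n m (\<lambda>l. ?U (x # y # l)) (z # v) + ?U (x # y # v)"
    by (subst gd_Cons[OF sl]) (use x y z vv lv in \<open>auto simp: valid_idx_def\<close>)
  also have "gd n m (\<lambda>l. ?U (x # y # l)) (z # v) = (if n \<le> x + y then gd n m \<chi> (z # v) else 0)"
    unfolding sl2 by (cases "n \<le> x + y") (simp_all add: gd_scale[of _ _ 1, simplified])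
  finally have F: "gd n (Suc (Suc m)) ?U ks = ?U (y # z # v) - ?U (((x + y) mod n) # z # v) -
    (?U (x # z # v) - ?U (x # ((y + z) mod n) # v) - (if n \<le> x + y then gd n m \<chi> (z # v) else 0)
      + ?U (x # y # v)) + ?U (x # z # v)" .
  have u1: "?U (y # z # v) = (if n \<le> y + z then \<chi> v else 0)" using y z U1 by simp
  have u2: "?U (((x + y) mod n) # z # v) = (if (x + y) mod n \<noteq> 0 \<and> n \<le> (x + y) mod n + z then \<chi> v else 0)"
    using x y z U1 by simp
  have u3: "?U (x # z # v) = (if n \<le> x + z then \<chi> v else 0)" using x z U1 by simp
  have u4: "?U (x # ((y + z) mod n) # v) = (if (y + z) mod n \<noteq> 0 \<and> n \<le> x + (y + z) mod n then \<chi> v else 0)"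
    using x y z U1 by simp
  have u5: "?U (x # y # v) = (if n \<le> x + y then \<chi> v else 0)" using x y U1 by simp
  have "gd n (Suc (Suc m)) ?U ks = (if n \<le> x + y then gd n m \<chi> (z # v) else 0)"
    unfolding F u1 u2 u3 u4 u5 by (rule carry_ring[OF x y z])
  moreover have "ucup n (Suc m) (gd n m \<chi>) ks = (if n \<le> x + y then gd n m \<chi> (z # v) else 0)"
    using True ks by (simp add: ucup_def)
  ultimately show ?thesis by simp
qed


primrec upow :: "nat \<Rightarrow> nat \<Rightarrow> nat list \<Rightarrow> 'r::comm_ring_1" where
  "upow n 0 = (\<lambda>ks. if ks = [] then 1 else 0)"
| "upow n (Suc k) = ucup n (2 * k) (upow n k)"

definition cob :: "nat \<Rightarrow> nat \<Rightarrow> (nat list \<Rightarrow> 'r::comm_ring_1) \<Rightarrow> bool" where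
  "cob n m f \<longleftrightarrow> (if m = 0 then (\<forall>ks. f ks = 0) else (\<exists>g \<in> gC n (m - 1). \<forall>ks. f ks = gd n (m - 1) g ks))"

lemma gC_diff: "f \<in> gC n m \<Longrightarrow> g \<in> gC n m \<Longrightarrow> (\<lambda>l. f l - g l) \<in> gC n m"
  by (rule gCI) (simp add: gCD)
lemma gC_add: "f \<in> gC n m \<Longrightarrow> g \<in> gC n m \<Longrightarrow> (\<lambda>l. f l + g l) \<in> gC n m"
  by (rule gCI) (simp add: gCD)
lemma gC_scale: "f \<in> gC n m \<Longrightarrow> (\<lambda>l. c * f l) \<in> gC n m"
  by (rule gCI) (simp add: gCD)
lemma gC_uminus: "f \<in> gC n m \<Longrightarrow> (\<lambda>l. - f l) \<in> gC n m"
  by (rule gCI) (simp add: gCD)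
lemma gC_0: "(\<lambda>l. 0) \<in> gC n m"
  by (rule gCI) simp

lemma ucup_add: "ucup n m (\<lambda>l. f l + g l) ks = ucup n m f ks + ucup n m g ks"
  by (simp add: ucup_def)
lemma ucup_diff: "ucup n m (\<lambda>l. f l - g l) ks = ucup n m f ks - ucup n m g ks"
  by (simp add: ucup_def)
lemma ucup_scale: "ucup n m (\<lambda>l. c * f l) ks = c * ucup n m f ks"
  by (simp add: ucup_def)
lemma ucup_zero[simp]: "ucup n m (\<lambda>l. 0) ks = 0"
  by (simp add: ucup_def)

lemma upow_gC: "upow n k \<in> gC n (2 * k)"
proof (induction k)
  case 0
  show ?case by (rule gCI) (auto simp: valid_idx_def)
next
  case (Suc k)
  show ?case using ucup_gC[of n "2 * k" "upow n k"] by simp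
qed

lemma upow_cyc: "gd n (2 * k) (upow n k :: nat list \<Rightarrow> 'r::comm_ring_1) ks = 0"
proof (induction k arbitrary: ks)
  case 0 then show ?case by simp
next
  case (Suc k)
  have "gd n (2 * Suc k) (upow n (Suc k)) ks = ucup n (Suc (2 * k)) (gd n (2 * k) (upow n k)) ks"
    using ucup_gd[OF upow_gC[of n k]] by simp
  also have "gd n (2 * k) (upow n k :: nat list \<Rightarrow> 'r) = (\<lambda>l. 0)" using Suc by (intro ext) auto
  finally show ?case by simp
qed

lemma Z1:
  fixes \<phi> :: "nat list \<Rightarrow> 'r::idom"
  assumes n2: "1 < n" and nz: "of_nat n \<noteq> (0::'r)" and C: "\<phi> \<in> gC n 1"
    and cyc: "\<And>ks. gd n 1 \<phi> ks = 0"
  shows "\<phi> ks = 0"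
proof -
  have R: "\<phi> [(1 + a) mod n] = \<phi> [a] + \<phi> [1]" if "a < n" for a
  proof -
    have "gd n (Suc 0) \<phi> (1 # [a]) = \<phi> [a] - \<phi> [(1 + a) mod n] - gd n 0 (\<lambda>l. \<phi> (1 # l)) [a] + \<phi> [1]"
      using gd_Cons[OF C[simplified], of 1 "[a]"] that n2 by simp
    then show ?thesis using cyc[of "[1, a]"] by (simp add: algebra_simps)
  qed
  have L: "\<phi> [b] = of_nat b * \<phi> [1]" if "b < n" for b
    using that
  proof (induction b)
    case 0 then show ?case using gC_zero[OF C, of "[0]"] by simp
  next
    case (Suc b)
    then show ?case using R[of b] by (simp add: algebra_simps)
  qed
  have "\<phi> [0] = \<phi> [n - 1] + \<phi> [1]" using R[of "n - 1"] n2 by simp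
  then have "of_nat n * \<phi> [1] = 0" using L[of "n - 1"] n2 gC_zero[OF C, of "[0]"]
    by (simp add: algebra_simps of_nat_diff)
  then have p1: "\<phi> [1] = 0" using nz by simp
  show ?thesis
  proof (cases "valid_idx n 1 ks")
    case False then show ?thesis using gCD[OF C] by simp
  next
    case True
    then obtain b where "ks = [b]" "b < n" by (auto simp: valid_idx_def length_Suc_conv)
    then show ?thesis using L p1 by simp
  qed
qed


lemma decomp':
  assumes "1 < n" "\<phi> \<in> gC n (Suc (Suc m))" "\<And>ks. gd n (Suc (Suc m)) \<phi> ks = 0"
  shows "\<phi> ks = ucup n m (tsum n m (\<lambda>l. \<phi> (1 # l))) ks - gd n (Suc m) (jop n (Suc m) (\<lambda>l. \<phi> (1 # l))) ks"
    "gd n m (tsum n m (\<lambda>l. \<phi> (1 # l))) ks = 0"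
proof -
  have e: "(\<lambda>l. \<phi> (1 # l)) = \<xi> \<phi>" by (simp add: \<xi>_def[OF assms])
  show "\<phi> ks = ucup n m (tsum n m (\<lambda>l. \<phi> (1 # l))) ks - gd n (Suc m) (jop n (Suc m) (\<lambda>l. \<phi> (1 # l))) ks"
    unfolding e using decomp[OF assms, of ks] by (simp add: algebra_simps)
  show "gd n m (tsum n m (\<lambda>l. \<phi> (1 # l))) ks = 0"
    unfolding e by (rule tsum_xi_cocycle[OF assms])
qed

lemma Zodd:
  fixes \<phi> :: "nat list \<Rightarrow> 'r::idom"
  assumes n2: "1 < n" and nz: "of_nat n \<noteq> (0::'r)"
  shows "\<phi> \<in> gC n (Suc (2 * k)) \<Longrightarrow> (\<And>ks. gd n (Suc (2 * k)) \<phi> ks = 0)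
     \<Longrightarrow> \<exists>g \<in> gC n (2 * k). \<forall>ks. \<phi> ks = gd n (2 * k) g ks"
proof (induction k arbitrary: \<phi>)
  case 0
  then have "\<phi> ks = 0" for ks using Z1[OF n2 nz, of \<phi>] by simp
  then show ?case using gC_0 by fastforce
next
  case (Suc k)
  let ?m = "Suc (2 * k)"
  have C: "\<phi> \<in> gC n (Suc (Suc ?m))" and cy: "\<And>ks. gd n (Suc (Suc ?m)) \<phi> ks = 0"
    using Suc.prems by simp_all
  let ?t = "tsum n ?m (\<lambda>l. \<phi> (1 # l))"
  have tc: "?t \<in> gC n (Suc (2 * k))" by (rule tsum_gC)
  obtain g where g: "g \<in> gC n (2 * k)" "\<And>ks. ?t ks = gd n (2 * k) g ks"
    using Suc.IH[OF tc decomp'(2)[OF n2 C cy]] by blast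
  have tg: "?t = gd n (2 * k) g" using g(2) by (intro ext) simp
  let ?g = "\<lambda>l. ucup n (2 * k) g l - jop n (Suc ?m) (\<lambda>l. \<phi> (1 # l)) l"
  have gC': "?g \<in> gC n (2 * Suc k)"
    using gC_diff[OF ucup_gC[of n "2 * k" g] jop_gC] by simp
  have "\<phi> ks = gd n (2 * Suc k) ?g ks" for ks
  proof -
    have "\<phi> ks = ucup n ?m (gd n (2 * k) g) ks - gd n (Suc ?m) (jop n (Suc ?m) (\<lambda>l. \<phi> (1 # l))) ks"
      using decomp'(1)[OF n2 C cy, of ks] unfolding tg .
    also have "ucup n ?m (gd n (2 * k) g) ks = gd n (Suc ?m) (ucup n (2 * k) g) ks"
      using ucup_gd[OF g(1), of ks] by simp
    finally show ?thesis by (simp add: gd_diff)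
  qed
  then show ?case using gC' by blast
qed


lemma Zeven:
  fixes \<phi> :: "nat list \<Rightarrow> 'r::idom"
  assumes n2: "1 < n" and nz: "of_nat n \<noteq> (0::'r)"
  shows "\<phi> \<in> gC n (2 * k) \<Longrightarrow> (\<And>ks. gd n (2 * k) \<phi> ks = 0)
     \<Longrightarrow> \<exists>c. cob n (2 * k) (\<lambda>ks. \<phi> ks - c * upow n k ks)"

proof (induction k arbitrary: \<phi>)
  case 0
  have C0: "\<phi> \<in> gC n 0" using "0.prems"(1) by simp
  have F: "\<phi> ks - \<phi> [] * upow n 0 ks = 0" for ks
  proof (cases "ks = []")
    case False
    then have "\<not> valid_idx n 0 ks" by (simp add: valid_idx_def)
    then show ?thesis using gCD[OF C0] False by simp
  qed simp
  have "cob n (2 * 0) (\<lambda>ks. \<phi> ks - \<phi> [] * upow n 0 ks)"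
    by (simp only: cob_def mult_0_right if_True simp_thms) (rule allI, rule F)
  then show ?case by blast
next
  case (Suc k)
  let ?m = "2 * k"
  have C: "\<phi> \<in> gC n (Suc (Suc ?m))" and cy: "\<And>ks. gd n (Suc (Suc ?m)) \<phi> ks = 0"
    using Suc.prems by simp_all
  let ?t = "tsum n ?m (\<lambda>l. \<phi> (1 # l))"
  let ?j = "jop n (Suc ?m) (\<lambda>l. \<phi> (1 # l))"
  have tc: "?t \<in> gC n (2 * k)" by (rule tsum_gC)
  obtain c where c: "cob n (2 * k) (\<lambda>ks. ?t ks - c * upow n k ks)"
    using Suc.IH[OF tc decomp'(2)[OF n2 C cy]] by blast
  have D: "\<phi> ks = ucup n ?m ?t ks - gd n (Suc ?m) ?j ks" for ks
    using decomp'(1)[OF n2 C cy, of ks] .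
  show ?case
  proof (cases k)
    case 0
    then have t0: "?t = (\<lambda>ks. c * upow n 0 ks)" using c by (intro ext) (simp add: cob_def)
    have "\<phi> ks - c * upow n (Suc k) ks = gd n (Suc 0) (\<lambda>l. - ?j l) ks" for ks
    proof -
      have "ucup n ?m ?t ks = c * upow n (Suc k) ks" unfolding t0 using 0 by (simp add: ucup_scale)
      moreover have "gd n (Suc 0) (\<lambda>l. - ?j l) ks = - gd n (Suc ?m) ?j ks"
        using 0 gd_scale[of n "Suc 0" "-1" ?j ks] by simp
      ultimately show ?thesis using D[of ks] by simp
    qed
    moreover have "(\<lambda>l. - ?j l) \<in> gC n (Suc 0)" using gC_uminus[OF jop_gC] 0 by simp
    ultimately show ?thesis using 0 by (auto simp: cob_def)
  next
    case (Suc k')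
    obtain g where g: "g \<in> gC n (Suc (2 * k'))" "\<And>ks. ?t ks - c * upow n k ks = gd n (Suc (2 * k')) g ks"
      using c Suc by (auto simp: cob_def)
    have tg: "?t = (\<lambda>ks. c * upow n k ks + gd n (Suc (2 * k')) g ks)"
      using g(2) by (intro ext) (simp add: algebra_simps)
    let ?g = "\<lambda>l. ucup n (Suc (2 * k')) g l - ?j l"
    have gC': "?g \<in> gC n (Suc ?m)"
      using gC_diff[OF ucup_gC[of n "Suc (2 * k')" g] jop_gC] Suc by simp
    have "\<phi> ks - c * upow n (Suc k) ks = gd n (Suc ?m) ?g ks" for ks
    proof -
      have "ucup n ?m (gd n (Suc (2 * k')) g) ks = gd n (Suc ?m) (ucup n (Suc (2 * k')) g) ks"
        using ucup_gd[OF g(1), of ks] Suc by simp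
      then show ?thesis
      proof -
        have "ucup n ?m ?t ks = c * upow n (Suc k) ks + ucup n ?m (gd n (Suc (2 * k')) g) ks"
          unfolding tg by (simp add: ucup_add ucup_scale)
        moreover have "gd n (Suc ?m) ?g ks = gd n (Suc ?m) (ucup n (Suc (2 * k')) g) ks - gd n (Suc ?m) ?j ks"
          by (rule gd_diff)
        ultimately show ?thesis using D[of ks] \<open>ucup n ?m (gd n (Suc (2 * k')) g) ks = gd n (Suc ?m) (ucup n (Suc (2 * k')) g) ks\<close>
          by simp
      qed
    qed
    then show ?thesis using gC' by (auto simp: cob_def)
  qed
qed



primrec psi :: "nat \<Rightarrow> nat \<Rightarrow> (nat list \<Rightarrow> 'r::comm_ring_1) \<Rightarrow> 'r" where
  "psi n 0 f = f []"
| "psi n (Suc k) f = (\<Sum>x<n. psi n k (\<lambda>r. f (x # 1 # r)))"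

lemma psi_cong:
  "1 < n \<Longrightarrow> (\<And>r. length r = 2 * k \<Longrightarrow> set r \<subseteq> {..<n} \<Longrightarrow> f r = g r) \<Longrightarrow> psi n k f = psi n k g"
proof (induction k arbitrary: f g)
  case 0 then show ?case by simp
next
  case (Suc k)
  show ?case
    by (simp, rule sum.cong[OF refl], rule Suc.IH) (use Suc.prems in auto)
qed

lemma psi_add: "psi n k (\<lambda>r. f r + g r) = psi n k f + psi n k g"
  by (induction k arbitrary: f g) (simp_all add: sum.distrib)

lemma psi_diff: "psi n k (\<lambda>r. f r - g r) = psi n k f - psi n k g"
  by (induction k arbitrary: f g) (simp_all add: sum_subtractf)

lemma psi_scale: "psi n k (\<lambda>r. c * f r) = c * psi n k f"
  by (induction k arbitrary: f) (simp_all add: sum_distrib_left)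

lemma psi_zero: "psi n k (\<lambda>r. 0) = 0"
  by (induction k) simp_all

lemma psi_sum: "psi n k (\<lambda>r. \<Sum>x\<in>A. f x r) = (\<Sum>x\<in>A. psi n k (f x))"
proof (induction k arbitrary: f)
  case 0 then show ?case by simp
next
  case (Suc k)
  show ?case by (simp add: Suc.IH sum.swap[of _ A])
qed

lemma psiA_aux:
  fixes \<psi> :: "nat list \<Rightarrow> 'r::comm_ring_1"
  assumes B: "\<And>\<psi>' :: nat list \<Rightarrow> 'r. \<psi>' \<in> gC n (2 * k) \<Longrightarrow> psi n k (\<lambda>r. gd n (2 * k) \<psi>' (1 # r)) = 0"
    and n2: "1 < n" and C: "\<psi> \<in> gC n (Suc (2 * k))"
  shows "psi n (Suc k) (gd n (Suc (2 * k)) \<psi>) = of_nat n * psi n k (\<lambda>r. \<psi> (1 # r))"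
proof -
  have "psi n (Suc k) (gd n (Suc (2 * k)) \<psi>) = (\<Sum>x<n. psi n k (\<lambda>r. gd n (Suc (2 * k)) \<psi> (x # 1 # r)))"
    by simp
  also have "\<dots> = (\<Sum>x<n. psi n k (\<lambda>r. \<psi> (1 # r) - \<psi> (((x + 1) mod n) # r)
      - gd n (2 * k) (\<lambda>l. \<psi> (x # l)) (1 # r) + \<psi> (x # r)))"
  proof (rule sum.cong[OF refl], rule psi_cong[OF n2])
    fix x r assume "x \<in> {..<n}" "length r = 2 * k" "set r \<subseteq> {..<n}"
    then show "gd n (Suc (2 * k)) \<psi> (x # 1 # r) = \<psi> (1 # r) - \<psi> (((x + 1) mod n) # r)
      - gd n (2 * k) (\<lambda>l. \<psi> (x # l)) (1 # r) + \<psi> (x # r)"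
      using gd_Cons[OF C, of x "1 # r"] n2 by simp
  qed
  also have "\<dots> = (\<Sum>x<n. psi n k (\<lambda>r. \<psi> (1 # r)) - psi n k (\<lambda>r. \<psi> (((x + 1) mod n) # r))
      - psi n k (\<lambda>r. gd n (2 * k) (\<lambda>l. \<psi> (x # l)) (1 # r)) + psi n k (\<lambda>r. \<psi> (x # r)))"
    by (simp add: psi_add psi_diff)
  also have "\<dots> = (\<Sum>x<n. psi n k (\<lambda>r. \<psi> (1 # r)) - psi n k (\<lambda>r. \<psi> (((x + 1) mod n) # r))
      + psi n k (\<lambda>r. \<psi> (x # r)))"
  proof -
    have "psi n k (\<lambda>r. gd n (2 * k) (\<lambda>l. \<psi> (x # l)) (1 # r)) = 0" for x
      by (rule B[OF slice_gC[OF C]])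
    then show ?thesis by simp
  qed
  also have "\<dots> = of_nat n * psi n k (\<lambda>r. \<psi> (1 # r))"
    using sum_shift_Suc[of "\<lambda>y. psi n k (\<lambda>r. \<psi> (y # r))" n]
    by (simp add: sum.distrib sum_subtractf)
  finally show ?thesis .
qed

lemma psiB:
  assumes n2: "1 < n"
  shows "\<psi> \<in> gC n (2 * k) \<Longrightarrow> psi n k (\<lambda>r. gd n (2 * k) \<psi> (1 # r)) = 0"
proof (induction k arbitrary: \<psi>)
  case 0 then show ?case by simp
next
  case (Suc k)
  have C: "\<psi> \<in> gC n (Suc (Suc (2 * k)))" using Suc.prems by simp
  have a1C: "(\<lambda>l. \<psi> (1 # l)) \<in> gC n (Suc (2 * k))" by (rule slice_gC[OF C])
  have "psi n (Suc k) (\<lambda>r. gd n (2 * Suc k) \<psi> (1 # r))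
      = (\<Sum>x<n. psi n k (\<lambda>r. gd n (Suc (Suc (2 * k))) \<psi> (1 # x # 1 # r)))"
    by simp
  also have "\<dots> = (\<Sum>x<n. psi n k (\<lambda>r. \<psi> (x # 1 # r) - \<psi> (((x + 1) mod n) # 1 # r)
      - gd n (Suc (2 * k)) (\<lambda>l. \<psi> (1 # l)) (x # 1 # r) + \<psi> (1 # 1 # r)))"
  proof (rule sum.cong[OF refl], rule psi_cong[OF n2])
    fix x r assume "x \<in> {..<n}" "length r = 2 * k" "set r \<subseteq> {..<n}"
    then show "gd n (Suc (Suc (2 * k))) \<psi> (1 # x # 1 # r) = \<psi> (x # 1 # r) - \<psi> (((x + 1) mod n) # 1 # r)
      - gd n (Suc (2 * k)) (\<lambda>l. \<psi> (1 # l)) (x # 1 # r) + \<psi> (1 # 1 # r)"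
      using gd_Cons[OF C, of 1 "x # 1 # r"] n2 by (simp add: add.commute)
  qed
  also have "\<dots> = (\<Sum>x<n. psi n k (\<lambda>r. \<psi> (x # 1 # r)) - psi n k (\<lambda>r. \<psi> (((x + 1) mod n) # 1 # r))
      - psi n k (\<lambda>r. gd n (Suc (2 * k)) (\<lambda>l. \<psi> (1 # l)) (x # 1 # r)) + psi n k (\<lambda>r. \<psi> (1 # 1 # r)))"
    by (simp add: psi_add psi_diff)
  also have "\<dots> = (\<Sum>x<n. psi n k (\<lambda>r. \<psi> (x # 1 # r))) - (\<Sum>x<n. psi n k (\<lambda>r. \<psi> (((x + 1) mod n) # 1 # r)))
      - psi n (Suc k) (gd n (Suc (2 * k)) (\<lambda>l. \<psi> (1 # l))) + of_nat n * psi n k (\<lambda>r. \<psi> (1 # 1 # r))"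
    by (simp add: sum.distrib sum_subtractf)
  also have "psi n (Suc k) (gd n (Suc (2 * k)) (\<lambda>l. \<psi> (1 # l))) = of_nat n * psi n k (\<lambda>r. \<psi> (1 # 1 # r))"
    using psiA_aux[OF Suc.IH n2 a1C] by simp
  also have "(\<Sum>x<n. psi n k (\<lambda>r. \<psi> (((x + 1) mod n) # 1 # r))) = (\<Sum>x<n. psi n k (\<lambda>r. \<psi> (x # 1 # r)))"
    by (rule sum_shift_mod[of "\<lambda>y. psi n k (\<lambda>r. \<psi> (y # 1 # r))"])
  finally show ?case by simp
qed

lemma psiA:
  "1 < n \<Longrightarrow> \<psi> \<in> gC n (Suc (2 * k)) \<Longrightarrow>
    psi n (Suc k) (gd n (Suc (2 * k)) \<psi>) = of_nat n * psi n k (\<lambda>r. \<psi> (1 # r))"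
  by (rule psiA_aux[OF psiB])

lemma psi_U: "1 < n \<Longrightarrow> psi n k (upow n k :: nat list \<Rightarrow> 'r::comm_ring_1) = 1"
proof (induction k)
  case 0 then show ?case by simp
next
  case (Suc k)
  have "psi n (Suc k) (upow n (Suc k) :: nat list \<Rightarrow> 'r) = (\<Sum>x<n. psi n k (\<lambda>r. ucup n (2 * k) (upow n k) (x # 1 # r)))"
    by simp
  also have "\<dots> = (\<Sum>x<n. psi n k (\<lambda>r. (if x = n - 1 then 1 else 0) * (upow n k r :: 'r)))"
  proof (rule sum.cong[OF refl], rule psi_cong[OF Suc.prems])
    fix x r assume x: "x \<in> {..<n}" and r: "length r = 2 * k" "set r \<subseteq> {..<n}"
    show "ucup n (2 * k) (upow n k) (x # 1 # r) = (if x = n - 1 then 1 else 0) * (upow n k r :: 'r)"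
    proof (cases "valid_idx n (2 * k) r")
      case False
      have u0: "upow n k r = (0::'r)" using gCD[OF upow_gC False] .
      then show ?thesis by (simp add: ucup_def)
    next
      case True
      then show ?thesis using x Suc.prems by (auto simp: ucup_def valid_idx_def)
    qed
  qed
  also have "\<dots> = (\<Sum>x<n. (if x = n - 1 then 1 else 0) * psi n k (upow n k :: nat list \<Rightarrow> 'r))"
    by (simp add: psi_scale)
  also have "\<dots> = 1" using Suc by simp
  finally show ?case .
qed

lemma Z6:
  assumes n2: "1 < n" and g: "g \<in> gC n (Suc (2 * k))"
    and e: "\<And>ks. c * upow n (Suc k) ks = gd n (Suc (2 * k)) g ks"
  shows "of_nat n dvd (c::'r::comm_ring_1)"
proof -
  have "psi n (Suc k) (\<lambda>ks. c * upow n (Suc k) ks) = c * psi n (Suc k) (upow n (Suc k))" by (rule psi_scale)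
  also have "psi n (Suc k) (upow n (Suc k)) = (1::'r)" by (rule psi_U[OF n2])
  finally have e1: "psi n (Suc k) (\<lambda>ks. c * upow n (Suc k) ks) = c" by simp
  have e2: "(\<lambda>ks. c * upow n (Suc k) ks) = gd n (Suc (2 * k)) g" using e by (intro ext) simp
  have "c = psi n (Suc k) (gd n (Suc (2 * k)) g)" using e1 e2 by metis
  also have "\<dots> = of_nat n * psi n k (\<lambda>r. g (1 # r))" by (rule psiA[OF n2 g])
  finally have "c = of_nat n * psi n k (\<lambda>r. g (1 # r))" .
  then show ?thesis by simp
qed


definition dface :: "nat \<Rightarrow> nat \<Rightarrow> nat list \<Rightarrow> nat list" where
  "dface n i x = (if Suc i < length x then take i x @ [(x ! i + x ! Suc i) mod n] @ drop (Suc (Suc i)) x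
     else ((last x + hd x) mod n) # butlast (tl x))"

lemma length_dface: "2 \<le> length x \<Longrightarrow> length (dface n i x) = length x - 1"
  by (auto simp: dface_def)

lemma nth_dface_in:
  assumes "Suc i < length x" "k < length x - 1"
  shows "dface n i x ! k = (if k < i then x ! k else if k = i then (x ! i + x ! Suc i) mod n else x ! Suc k)"
  using assms by (auto simp: dface_def nth_append min_def)

lemma nth_dface_wrap:
  assumes "2 \<le> length x" "length x \<le> Suc i" "k < length x - 1"
  shows "dface n i x ! k = (if k = 0 then (x ! (length x - 1) + x ! 0) mod n else x ! k)"
proof -
  have ne: "x \<noteq> []" using assms by auto
  show ?thesis
    using assms ne by (cases k) (auto simp: dface_def last_conv_nth hd_conv_nth nth_butlast nth_tl)
qed

lemma R1:
  assumes L: "2 \<le> length x" and i: "Suc i < length x"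
  shows "dface n i (rotate1 x) = rotate1 (dface n (Suc i) x)"
proof (rule nth_equalityI)
  show "length (dface n i (rotate1 x)) = length (rotate1 (dface n (Suc i) x))"
    using L by (simp add: length_dface)
next
  fix k assume k: "k < length (dface n i (rotate1 x))"
  then have k': "k < length x - 1" using L by (simp add: length_dface)
  have r1: "rotate1 x ! t = x ! (Suc t mod length x)" if "t < length x" for t
    using that by (rule nth_rotate1)
  have lhs: "dface n i (rotate1 x) ! k = (if k < i then rotate1 x ! k else if k = i then (rotate1 x ! i + rotate1 x ! Suc i) mod n
       else rotate1 x ! Suc k)"
    using nth_dface_in[of i "rotate1 x" k n] i k' L by simp
  have rhs: "rotate1 (dface n (Suc i) x) ! k = dface n (Suc i) x ! (Suc k mod (length x - 1))"
    using k' L by (simp add: nth_rotate1 length_dface)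
  show "dface n i (rotate1 x) ! k = rotate1 (dface n (Suc i) x) ! k"
  proof (cases "Suc (Suc i) < length x")
    case True
    consider "k < i" | "k = i" | "i < k" "Suc k < length x - 1" | "Suc k = length x - 1" using k' by linarith
    then show ?thesis
    proof cases
      case 1
      then show ?thesis unfolding lhs rhs using nth_dface_in[OF True, of "Suc k" n] True k' r1[of k] by simp
    next
      case 2
      then show ?thesis unfolding lhs rhs using nth_dface_in[OF True, of "Suc k" n] True k' r1[of k] r1[of "Suc k"] by simp
    next
      case 3
      then show ?thesis unfolding lhs rhs using nth_dface_in[OF True, of "Suc k" n] True k' r1[of "Suc k"] by simp
    next
      case 4
      then have "Suc k mod (length x - 1) = 0" by simp
      moreover have "Suc (Suc k) = length x" using 4 L by simp
      then have "Suc (Suc k) mod length x = 0" by simp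
      moreover have "i < k" using 4 True by linarith
      ultimately show ?thesis unfolding lhs rhs using nth_dface_in[OF True, of 0 n] True 4 r1[of "Suc k"] L by simp
    qed
  next
    case False
    then have e: "length x = Suc (Suc i)" using i by simp
    have w: "dface n (Suc i) x ! t = (if t = 0 then (x ! (length x - 1) + x ! 0) mod n else x ! t)" if "t < length x - 1" for t
      using nth_dface_wrap[OF L, of "Suc i" t n] e that by simp
    consider "k < i" | "k = i" using k' e by linarith
    then show ?thesis
    proof cases
      case 1
      then show ?thesis unfolding lhs rhs using w[of "Suc k"] e r1[of k] by simp
    next
      case 2
      then show ?thesis unfolding lhs rhs using w[of 0] e r1[of k] r1[of "Suc k"] by simp
    qed
  qed
qed

lemma R2:
  assumes L: "2 \<le> length x"
  shows "dface n (length x - 1) (rotate1 x) = dface n 0 x"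
proof (rule nth_equalityI)
  show "length (dface n (length x - 1) (rotate1 x)) = length (dface n 0 x)"
    using L by (simp add: length_dface)
next
  fix k assume k: "k < length (dface n (length x - 1) (rotate1 x))"
  then have k': "k < length x - 1" using L by (simp add: length_dface)
  have r1: "rotate1 x ! t = x ! (Suc t mod length x)" if "t < length x" for t
    using that by (rule nth_rotate1)
  have w: "dface n (length x - 1) (rotate1 x) ! k = (if k = 0 then (rotate1 x ! (length x - 1) + rotate1 x ! 0) mod n else rotate1 x ! k)"
    using nth_dface_wrap[of "rotate1 x" "length x - 1" k n] L k' by simp
  have d: "dface n 0 x ! k = (if k = 0 then (x ! 0 + x ! 1) mod n else x ! Suc k)"
    using nth_dface_in[of 0 x k n] L k' by simp
  show "dface n (length x - 1) (rotate1 x) ! k = dface n 0 x ! k"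
  proof -
    have e: "Suc (length x - Suc 0) = length x" using L by simp
    have ne: "x \<noteq> []" using L by auto
    show ?thesis
      unfolding w d using r1[of k] r1[of "length x - 1"] r1[of 0] L k' ne by (simp add: add.commute e)
  qed
qed


lemma R1s:
  assumes L: "2 \<le> length x"
  shows "i + j < length x \<Longrightarrow> dface n i (rotate j x) = rotate j (dface n (i + j) x)"
proof (induction j arbitrary: i)
  case 0 then show ?case by simp
next
  case (Suc j)
  have "dface n i (rotate (Suc j) x) = dface n i (rotate1 (rotate j x))" by simp
  also have "\<dots> = rotate1 (dface n (Suc i) (rotate j x))"
    by (rule R1) (use L Suc.prems in auto)
  also have "dface n (Suc i) (rotate j x) = rotate j (dface n (Suc i + j) x)"
    by (rule Suc.IH) (use Suc.prems in auto)
  finally show ?case by simp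
qed

lemma R3:
  assumes L: "2 \<le> length x" and i: "i < length x - 1" and j: "j < length x" and c: "length x \<le> i + j"
  shows "dface n i (rotate j x) = rotate (j - 1) (dface n (i + j - length x) x)"
proof -
  define j2 where "j2 = length x - 1 - i"
  define j1 where "j1 = j - j2"
  have j1p: "1 \<le> j1" using c i unfolding j1_def j2_def by linarith
  have jj: "j = j2 + j1" using c i unfolding j1_def j2_def by linarith
  have "dface n i (rotate j x) = dface n i (rotate j2 (rotate j1 x))"
    by (simp add: jj rotate_rotate)
  also have "\<dots> = rotate j2 (dface n (length x - 1) (rotate j1 x))"
    using R1s[of "rotate j1 x" i j2 n] L i unfolding j2_def by simp
  also have "rotate j1 x = rotate1 (rotate (j1 - 1) x)"
    using j1p by (metis Suc_diff_le diff_Suc_1 rotate_Suc)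
  also have "dface n (length x - 1) (rotate1 (rotate (j1 - 1) x)) = dface n 0 (rotate (j1 - 1) x)"
    using R2[of "rotate (j1 - 1) x" n] L by simp
  also have "\<dots> = rotate (j1 - 1) (dface n (j1 - 1) x)"
    using R1s[OF L, of 0 "j1 - 1" n] jj j by simp
  also have "rotate j2 (rotate (j1 - 1) (dface n (j1 - 1) x)) = rotate (j - 1) (dface n (i + j - length x) x)"
    using jj j1p c i unfolding j2_def by (simp add: rotate_rotate)
  finally show ?thesis .
qed

definition sig1 :: "nat \<Rightarrow> nat \<Rightarrow> nat \<Rightarrow> nat" where
  "sig1 L i j = (if i + j < L then i + j else i + j - L)"
definition sig2 :: "nat \<Rightarrow> nat \<Rightarrow> nat \<Rightarrow> nat" where
  "sig2 L i j = (if i + j < L then (if j = L - 1 then 0 else j) else j - 1)"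

lemma KL:
  assumes L: "2 \<le> length x" and i: "i < length x - 1" and j: "j < length x"
  shows "dface n i (rotate j x) = rotate (sig2 (length x) i j) (dface n (sig1 (length x) i j) x)"
proof (cases "i + j < length x")
  case True
  have e: "dface n i (rotate j x) = rotate j (dface n (i + j) x)" by (rule R1s[OF L True])
  show ?thesis
  proof (cases "j = length x - 1")
    case True
    have "rotate j (dface n (i + j) x) = dface n (i + j) x"
      using True L by (intro rotate_id) (simp add: length_dface)
    then show ?thesis using e True \<open>i + j < length x\<close> by (simp add: sig1_def sig2_def)
  next
    case False
    then show ?thesis using e True by (simp add: sig1_def sig2_def)
  qed
next
  case False
  then show ?thesis using R3[OF L i j] by (simp add: sig1_def sig2_def)
qed


definition bsum :: "nat \<Rightarrow> (nat list \<Rightarrow> 'r::comm_ring_1) \<Rightarrow> nat list \<Rightarrow> 'r" where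
  "bsum n F x = (\<Sum>i<length x. (-1) ^ i * F (dface n i x))"

definition bpsum :: "nat \<Rightarrow> (nat list \<Rightarrow> 'r::comm_ring_1) \<Rightarrow> nat list \<Rightarrow> 'r" where
  "bpsum n F x = (\<Sum>i<length x - 1. (-1) ^ i * F (dface n i x))"

definition Nop :: "(nat list \<Rightarrow> 'r::comm_ring_1) \<Rightarrow> nat list \<Rightarrow> 'r" where
  "Nop F y = (\<Sum>j<length y. (-1) ^ (j * (length y - 1)) * F (rotate j y))"

lemma minus_one_pow_add2: "(-1::'r::comm_ring_1) ^ (a + 2 * b) = (-1) ^ a"
  by (simp add: power_add power_mult)

lemma sign_lemma:
  assumes L: "2 \<le> L" and i: "i < L - 1" and j: "j < L"
  shows "(-1::'r::comm_ring_1) ^ sig1 L i j * (-1) ^ (sig2 L i j * (L - 2)) = (-1) ^ (j * (L - 1)) * (-1) ^ i"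
proof -
  obtain L0 where L0: "L = Suc (Suc L0)" using L by (metis add_2_eq_Suc le_Suc_ex)
  consider "i + j < L" "j \<noteq> L - 1" | "i + j < L" "j = L - 1" | "L \<le> i + j" by linarith
  then show ?thesis
  proof cases
    case 1
    then show ?thesis unfolding sig1_def sig2_def L0 by (simp add: power_add algebra_simps)
  next
    case 2
    then have i0: "i = 0" and jj: "j = Suc L0" using L0 by auto
    have "(-1::'r) ^ (Suc L0 * Suc L0) = (-1) ^ Suc L0"
      by (simp add: minus_one_power_iff even_mult_iff del: mult_Suc mult_Suc_right)
    then show ?thesis using 2 i0 jj unfolding sig1_def sig2_def L0 by simp
  next
    case 3
    obtain j0 where j0: "j = Suc j0" using 3 i L0 by (cases j) auto
    obtain t where t: "i + j0 = t + Suc L0" using 3 j0 L0 by (metis add_Suc_right le_add_diff_inverse2 Suc_le_mono add.commute)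
    have s1: "sig1 L i j = t" using 3 j0 t L0 by (simp add: sig1_def)
    have s2: "sig2 L i j = j0" using 3 j0 by (simp add: sig2_def)
    have e: "j * (L - 1) + i = (t + j0 * L0) + 2 * (L0 + 1)"
      using t j0 L0 by (simp add: algebra_simps)
    have "(-1::'r) ^ (j * (L - 1)) * (-1) ^ i = (-1) ^ (j * (L - 1) + i)" by (simp add: power_add)
    also have "\<dots> = (-1) ^ (t + j0 * L0)" unfolding e by (rule minus_one_pow_add2)
    finally have f: "(-1::'r) ^ (j * (L - 1)) * (-1) ^ i = (-1) ^ (t + j0 * L0)" .
    have l2: "L - 2 = L0" using L0 by simp
    show ?thesis unfolding s1 s2 l2 f by (simp add: power_add)
  qed
qed

definition tau :: "nat \<Rightarrow> nat \<times> nat \<Rightarrow> nat \<times> nat" where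
  "tau L p = (case p of (i', j') \<Rightarrow>
     if j' \<le> i' \<and> \<not> (i' = L - 1 \<and> j' = 0) then (j', i' - j')
     else if i' = L - 1 \<and> j' = 0 then (L - 1, 0) else (j' + 1, i' + L - j' - 1))"

lemma I2:
  fixes F :: "nat list \<Rightarrow> 'r::comm_ring_1"
  assumes L: "2 \<le> length x"
  shows "bsum n (Nop F) x = Nop (bpsum n F) x"
proof -
  define L where "L = length x"
  have L2: "2 \<le> L" using L unfolding L_def .
  have lhs: "bsum n (Nop F) x = (\<Sum>(i, j) \<in> {..<L} \<times> {..<L - 1}. (-1) ^ i * (-1) ^ (j * (L - 2)) * F (rotate j (dface n i x)))"
  proof -
    have "bsum n (Nop F) x = (\<Sum>i<L. \<Sum>j<L - 1. (-1) ^ i * ((-1) ^ (j * (L - 2)) * F (rotate j (dface n i x))))"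
      unfolding bsum_def Nop_def L_def using L by (simp add: length_dface sum_distrib_left numeral_2_eq_2)
    then show ?thesis by (simp add: sum.cartesian_product mult.assoc)
  qed
  have rhs: "Nop (bpsum n F) x = (\<Sum>(j, i) \<in> {..<L} \<times> {..<L - 1}.
      (-1) ^ (j * (L - 1)) * (-1) ^ i * F (rotate (sig2 L i j) (dface n (sig1 L i j) x)))"
  proof -
    have "Nop (bpsum n F) x = (\<Sum>j<L. \<Sum>i<L - 1. (-1) ^ (j * (L - 1)) * ((-1) ^ i * F (dface n i (rotate j x))))"
      unfolding bpsum_def Nop_def L_def by (simp add: sum_distrib_left)
    also have "\<dots> = (\<Sum>j<L. \<Sum>i<L - 1. (-1) ^ (j * (L - 1)) * ((-1) ^ i * F (rotate (sig2 L i j) (dface n (sig1 L i j) x))))"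
      by (intro sum.cong refl) (simp add: KL[OF L] L_def)
    finally show ?thesis by (simp add: sum.cartesian_product mult.assoc)
  qed
  have "(\<Sum>(j, i) \<in> {..<L} \<times> {..<L - 1}.
      (-1) ^ (j * (L - 1)) * (-1) ^ i * F (rotate (sig2 L i j) (dface n (sig1 L i j) x)))
     = (\<Sum>(i, j) \<in> {..<L} \<times> {..<L - 1}. (-1) ^ i * (-1) ^ (j * (L - 2)) * F (rotate j (dface n i x)))"
  proof (rule sum.reindex_bij_witness[where j = "\<lambda>(j, i). (sig1 L i j, sig2 L i j)" and i = "tau L"])
    fix a assume "a \<in> {..<L} \<times> {..<L - 1}"
    then obtain j i where a: "a = (j, i)" "j < L" "i < L - 1" by auto
    show "tau L (case a of (j, i) \<Rightarrow> (sig1 L i j, sig2 L i j)) = a"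
      using a L2 by (auto simp: tau_def sig1_def sig2_def)
    show "(case a of (j, i) \<Rightarrow> (sig1 L i j, sig2 L i j)) \<in> {..<L} \<times> {..<L - 1}"
      using a L2 by (auto simp: sig1_def sig2_def)
    show "(case (case a of (j, i) \<Rightarrow> (sig1 L i j, sig2 L i j)) of (i, j) \<Rightarrow> (-1) ^ i * (-1) ^ (j * (L - 2)) * F (rotate j (dface n i x)))
        = (case a of (j, i) \<Rightarrow> (-1) ^ (j * (L - 1)) * (-1) ^ i * F (rotate (sig2 L i j) (dface n (sig1 L i j) x)))"
      using a sign_lemma[OF L2 a(3) a(2), where 'r='r] by simp
  next
    fix b assume "b \<in> {..<L} \<times> {..<L - 1}"
    then obtain i' j' where b: "b = (i', j')" "i' < L" "j' < L - 1" by auto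
    show "(case tau L b of (j, i) \<Rightarrow> (sig1 L i j, sig2 L i j)) = b"
      using b L2 by (auto simp: tau_def sig1_def sig2_def)
    show "tau L b \<in> {..<L} \<times> {..<L - 1}"
      using b L2 by (auto simp: tau_def)
  qed
  then show ?thesis unfolding lhs rhs by simp
qed


definition Top :: "(nat list \<Rightarrow> 'r::comm_ring_1) \<Rightarrow> nat list \<Rightarrow> 'r" where
  "Top F y = (-1) ^ (length y - 1) * F (rotate (length y - 1) y)"

lemma rot_last: "y \<noteq> [] \<Longrightarrow> rotate (length y - 1) y = last y # butlast y"
proof -
  assume y: "y \<noteq> []"
  have "rotate (length (butlast y)) (butlast y @ [last y]) = [last y] @ butlast y"
    by (rule rotate_append)
  then show ?thesis using y by simp
qed

lemma I1:
  fixes F :: "nat list \<Rightarrow> 'r::comm_ring_1"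
  assumes L: "1 \<le> length y" and yn: "set y \<subseteq> {..<n}"
  shows "bsum n F (0 # y) = F y - bpsum n (\<lambda>z. F (0 # z)) y - Top F y"
proof -
  obtain L1 where L1: "length y = Suc L1" using L by (metis Suc_le_D One_nat_def)
  have y: "y \<noteq> []" using L1 by auto
  have d0: "dface n 0 (0 # y) = y"
  proof -
    have "hd y < n" using yn y by (cases y) auto
    then show ?thesis using y L1 by (cases y) (auto simp: dface_def)
  qed
  have dS: "dface n (Suc i) (0 # y) = 0 # dface n i y" if "i < L1" for i
    using that L1 by (simp add: dface_def)
  have dL: "dface n (Suc L1) (0 # y) = rotate L1 y"
  proof -
    have "last y < n" using yn y last_in_set by blast
    then show ?thesis using rot_last[OF y] L1 y by (simp add: dface_def)
  qed
  have "bsum n F (0 # y) = F (dface n 0 (0 # y)) + (\<Sum>i<L1. (-1) ^ Suc i * F (dface n (Suc i) (0 # y)))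
        + (-1) ^ Suc L1 * F (dface n (Suc L1) (0 # y))"
  proof -
    have sp: "(\<Sum>i<Suc (Suc L1). f i) = f 0 + (\<Sum>i<L1. f (Suc i)) + f (Suc L1)" for f :: "nat \<Rightarrow> 'r"
    proof -
      have "(\<Sum>i<Suc (Suc L1). f i) = f 0 + (\<Sum>i<Suc L1. f (Suc i))" by (rule sum.lessThan_Suc_shift)
      also have "(\<Sum>i<Suc L1. f (Suc i)) = (\<Sum>i<L1. f (Suc i)) + f (Suc L1)" by (rule sum.lessThan_Suc)
      finally show ?thesis by (simp add: add.assoc)
    qed
    show ?thesis unfolding bsum_def using L1 sp[of "\<lambda>i. (-1) ^ i * F (dface n i (0 # y))"] by simp
  qed
  also have "\<dots> = F y - (\<Sum>i<L1. (-1) ^ i * F (0 # dface n i y)) - (-1) ^ L1 * F (rotate L1 y)"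
    using d0 dS dL by (simp add: sum_negf)
  also have "(\<Sum>i<L1. (-1) ^ i * F (0 # dface n i y)) = bpsum n (\<lambda>z. F (0 # z)) y"
    unfolding bpsum_def using L1 by simp
  also have "(-1) ^ L1 * F (rotate L1 y) = Top F y"
    unfolding Top_def using L1 by simp
  finally show ?thesis .
qed

lemma mod_lt2c: "a < 2 * n \<Longrightarrow> a mod n = (if a < n then a else a - (n::nat))"
  by (simp add: le_mod_geq)

lemma I3:
  fixes F :: "nat list \<Rightarrow> 'r::comm_ring_1"
  assumes L: "1 \<le> length y"
  shows "Nop (Top F) y = Nop F y"
proof -
  define L where "L = length y"
  have L1: "1 \<le> L" using L unfolding L_def .
  define g where "g k = (-1) ^ (k * (L - 1)) * F (rotate k y)" for k
  have "Nop (Top F) y = (\<Sum>j<L. g ((j + (L - 1)) mod L))"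
  proof (unfold Nop_def Top_def L_def[symmetric], rule sum.cong[OF refl])
    fix j assume j: "j \<in> {..<L}"
    have r: "rotate (L - 1) (rotate j y) = rotate ((j + (L - 1)) mod L) y"
      unfolding rotate_rotate L_def by (metis add.commute rotate_conv_mod)
    have s: "(-1::'r) ^ (j * (L - 1)) * (-1) ^ (L - 1) = (-1) ^ ((j + (L - 1)) mod L * (L - 1))"
    proof (cases j)
      case 0
      have "(L - 1) mod L = L - 1" using L1 by simp
      then show ?thesis using 0 by (simp add: minus_one_power_iff even_mult_iff)
    next
      case (Suc j0)
      have "(j + (L - 1)) mod L = j0" using j Suc L1 by (simp add: mod_lt2c)
      have e: "j * (L - 1) + (L - 1) = j0 * (L - 1) + 2 * (L - 1)"
      proof -
        obtain L' where "L = Suc L'" using L1 by (metis Suc_le_D One_nat_def)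
        then show ?thesis using Suc by (simp add: algebra_simps)
      qed
      have "(-1::'r) ^ (j * (L - 1)) * (-1) ^ (L - 1) = (-1) ^ (j * (L - 1) + (L - 1))" by (simp add: power_add)
      also have "\<dots> = (-1) ^ (j0 * (L - 1) + 2 * (L - 1))" unfolding e ..
      also have "\<dots> = (-1) ^ (j0 * (L - 1))" by (rule minus_one_pow_add2)
      finally show ?thesis using \<open>(j + (L - 1)) mod L = j0\<close> by simp
    qed
    show "(-1) ^ (j * (L - 1)) * ((-1) ^ (length (rotate j y) - 1) * F (rotate (length (rotate j y) - 1) (rotate j y)))
        = g ((j + (L - 1)) mod L)"
      unfolding g_def using r s by (simp add: L_def mult.assoc[symmetric])
  qed
  also have "\<dots> = (\<Sum>j<L. g j)" by (rule sum_shift_mod)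
  also have "\<dots> = Nop F y" unfolding g_def Nop_def L_def ..
  finally show ?thesis .
qed

lemma Nop_cong: "(\<And>j. j < length y \<Longrightarrow> F (rotate j y) = G (rotate j y)) \<Longrightarrow> Nop F y = Nop G y"
  unfolding Nop_def by (rule sum.cong) auto

lemma Nop_diff: "Nop (\<lambda>z. F z - G z) y = Nop F y - Nop G y"
  unfolding Nop_def by (simp add: sum_subtractf algebra_simps)

lemma I4:
  fixes F :: "nat list \<Rightarrow> 'r::comm_ring_1"
  assumes L: "2 \<le> length y" and yn: "set y \<subseteq> {..<n}"
  shows "Nop (\<lambda>z. bsum n F (0 # z)) y = - bsum n (Nop (\<lambda>z. F (0 # z))) y"
proof -
  have "Nop (\<lambda>z. bsum n F (0 # z)) y = Nop (\<lambda>z. F z - bpsum n (\<lambda>z. F (0 # z)) z - Top F z) y"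
    by (rule Nop_cong, rule I1) (use L yn in auto)
  also have "\<dots> = Nop F y - Nop (bpsum n (\<lambda>z. F (0 # z))) y - Nop (Top F) y"
    by (simp add: Nop_diff)
  also have "Nop (Top F) y = Nop F y" by (rule I3) (use L in auto)
  also have "Nop (bpsum n (\<lambda>z. F (0 # z))) y = bsum n (Nop (\<lambda>z. F (0 # z))) y"
    by (rule I2[symmetric, OF L])
  finally show ?thesis by simp
qed


definition gval :: "nat \<Rightarrow> nat \<Rightarrow> nat list \<Rightarrow> nat" where
  "gval n t ks = (n - (t + sum_list ks) mod n) mod n"

definition gdel :: "nat \<Rightarrow> nat \<Rightarrow> nat \<Rightarrow> (nat list \<Rightarrow> 'r::comm_ring_1) \<Rightarrow> nat list \<Rightarrow> 'r" where
  "gdel n m t \<psi> ks = (if valid_idx n m ks then Nop \<psi> (gval n t ks # ks) else 0)"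

lemma gdel_gC: "gdel n m t \<psi> \<in> gC n m"
  by (rule gCI) (simp add: gdel_def)

lemma gval_lt: "0 < n \<Longrightarrow> gval n t ks < n"
  by (simp add: gval_def)

lemma gval_sum: "0 < n \<Longrightarrow> (gval n t ks + t + sum_list ks) mod n = 0"
proof -
  assume n: "0 < n"
  define a where "a = (t + sum_list ks) mod n"
  have a: "a < n" using n by (simp add: a_def)
  have "(gval n t ks + t + sum_list ks) mod n = ((n - a) mod n + (t + sum_list ks)) mod n"
    by (simp add: gval_def a_def add.assoc)
  also have "\<dots> = ((n - a) + a) mod n" by (metis a_def mod_add_eq mod_mod_trivial)
  also have "\<dots> = 0" using a by simp
  finally show ?thesis .
qed

lemma gval_unique:
  assumes n: "0 < n" and h: "h < n" and e: "(h + t + s) mod n = 0"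
  shows "h = gval n t (ks :: nat list) \<or> sum_list ks \<noteq> s"
proof (cases "sum_list ks = s")
  case True
  have e2: "(gval n t ks + t + s) mod n = 0" using gval_sum[OF n, of t ks] True by simp
  have "(h + (t + s)) mod n = (gval n t ks + (t + s)) mod n" using e e2 by (simp add: add.assoc)
  then have "h mod n = gval n t ks mod n" by (rule mod_add_cancel_aux)
  then show ?thesis using h gval_lt[OF n, of t ks] by simp
qed simp

lemma sum_list_split3:
  "Suc i < length x \<Longrightarrow> sum_list x = sum_list (take i x) + (x ! i + x ! Suc i) + sum_list (drop (Suc (Suc i)) x)"
proof -
  assume a: "Suc i < length x"
  have "x = take i x @ drop i x" by simp
  moreover have "drop i x = x ! i # x ! Suc i # drop (Suc (Suc i)) x"
    using a by (metis Cons_nth_drop_Suc Suc_lessD)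
  ultimately have "sum_list x = sum_list (take i x) + sum_list (x ! i # x ! Suc i # drop (Suc (Suc i)) x)"
    by (metis sum_list_append)
  then show ?thesis by (simp add: add.assoc)
qed

lemma mod_mid: "(a + b mod n + c) mod n = (a + b + c) mod (n::nat)"
  by (metis mod_add_left_eq mod_add_right_eq)
lemma mod_front: "(b mod n + c) mod n = (b + c) mod (n::nat)"
  by (simp add: mod_add_left_eq)

lemma sum_dface:
  assumes L: "2 \<le> length x"
  shows "sum_list (dface n i x) mod n = sum_list x mod n"
proof (cases "Suc i < length x")
  case True
  have "sum_list (dface n i x) = sum_list (take i x) + (x ! i + x ! Suc i) mod n + sum_list (drop (Suc (Suc i)) x)"
    using True by (simp add: dface_def)
  then show ?thesis using sum_list_split3[OF True] by (simp add: mod_mid)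
next
  case False
  obtain a y where xy: "x = a # y" using L by (cases x) auto
  have y: "y \<noteq> []" using L xy by auto
  define zs where "zs = butlast y"
  define b where "b = last y"
  have x: "x = a # zs @ [b]" using xy y by (simp add: zs_def b_def)
  have "sum_list (dface n i x) = (b + a) mod n + sum_list zs" using False x by (simp add: dface_def)
  moreover have "sum_list x = (b + a) + sum_list zs" using x by simp
  ultimately show ?thesis by (simp add: mod_front)
qed

lemma set_dface:
  assumes "set x \<subseteq> {..<n}" "0 < n" "2 \<le> length x"
  shows "set (dface n i x) \<subseteq> {..<n}"
proof (cases "Suc i < length x")
  case True
  then show ?thesis using assms by (auto simp: dface_def dest: in_set_takeD in_set_dropD)
next
  case False
  have "set (butlast (tl x)) \<subseteq> set x"
    by (cases x) (auto dest: in_set_butlastD)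
  then show ?thesis using False assms by (auto simp: dface_def)
qed

lemma tl_dface_indep:
  assumes "ks \<noteq> []"
  shows "tl (dface n i (a # ks)) = tl (dface n i (b # ks))"
  using assms by (cases i) (auto simp: dface_def)

lemma rd_bsum:
  assumes l: "length z = Suc m" and zn: "set z \<subseteq> {..<n}"
  shows "rd n m \<psi> z = bsum n (\<lambda>x. \<psi> (tl x)) (0 # z)"
proof -
  have z: "z \<noteq> []" using l by auto
  have sp: "(\<Sum>i<Suc (Suc m). f i) = f 0 + (\<Sum>i\<in>{1..m}. f i) + f (Suc m)" for f :: "nat \<Rightarrow> 'b::comm_monoid_add"
  proof -
    have "(\<Sum>i<Suc (Suc m). f i) = f 0 + (\<Sum>i<Suc m. f (Suc i))" by (rule sum.lessThan_Suc_shift)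
    also have "(\<Sum>i<Suc m. f (Suc i)) = (\<Sum>i<m. f (Suc i)) + f (Suc m)" by (rule sum.lessThan_Suc)
    also have "(\<Sum>i<m. f (Suc i)) = (\<Sum>i\<in>{1..m}. f i)"
      by (rule sum.reindex_bij_witness[where i = "\<lambda>i. i - 1" and j = Suc]) auto
    finally show ?thesis by (simp add: add.assoc)
  qed
  have d0: "tl (dface n 0 (0 # z)) = tl z" using l by (cases z) (auto simp: dface_def)
  have dm: "tl (dface n i (0 # z)) = mrg n z i" if "i \<in> {1..m}" for i
    using that l by (cases i) (auto simp: dface_def mrg_def)
  have dl: "tl (dface n (Suc m) (0 # z)) = butlast z" using l by (simp add: dface_def)
  have ms: "(\<Sum>i\<in>{1..m}. (-1) ^ i * \<psi> (tl (dface n i (0 # z)))) = (\<Sum>i\<in>{1..m}. (-1) ^ i * \<psi> (mrg n z i))"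
    by (rule sum.cong) (simp_all add: dm)
  have "bsum n (\<lambda>x. \<psi> (tl x)) (0 # z) = (\<Sum>i<Suc (Suc m). (-1) ^ i * \<psi> (tl (dface n i (0 # z))))"
    unfolding bsum_def using l by simp
  also have "\<dots> = \<psi> (tl z) + (\<Sum>i\<in>{1..m}. (-1) ^ i * \<psi> (mrg n z i)) + (-1) ^ Suc m * \<psi> (butlast z)"
    unfolding sp ms d0 dl by simp
  finally show ?thesis unfolding rd_def by simp
qed


lemma Nop_zero: "\<psi> \<in> gC n m' \<Longrightarrow> 0 \<in> set y \<Longrightarrow> Nop \<psi> y = 0"
  unfolding Nop_def by (rule sum.neutral) (simp add: gC_zero)

lemma Nop_head:
  assumes n: "0 < n" and C: "\<psi> \<in> gC n (Suc m)" and h: "h < n"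
    and e: "(h + t + sum_list b) mod n = 0" and lb: "length b = m" and bn: "set b \<subseteq> {..<n}"
  shows "Nop \<psi> (h # b) = gdel n m t \<psi> b"
proof (cases "valid_idx n m b")
  case True
  have "h = gval n t b" using gval_unique[OF n h e, of b] by simp
  then show ?thesis using True by (simp add: gdel_def)
next
  case False
  then have "0 \<in> set b" using lb bn by (auto simp: valid_idx_def subset_iff Suc_le_eq)
  then have "Nop \<psi> (h # b) = 0" by (intro Nop_zero[OF C]) simp
  then show ?thesis using False by (simp add: gdel_def)
qed

lemma gdel_gd:
  assumes n: "0 < n" and C: "\<psi> \<in> gC n (Suc m)"
  shows "gdel n (Suc m) t (gd n (Suc m) \<psi>) ks = - gd n m (gdel n m t \<psi>) ks"
proof (cases "valid_idx n (Suc m) ks")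
  case False
  then show ?thesis by (simp add: gdel_def gd_def)
next
  case True
  note v = valid_idxD[OF True]
  define g where "g = gval n t ks"
  have gn: "g < n" unfolding g_def by (rule gval_lt[OF n])
  have gks: "set (g # ks) \<subseteq> {..<n}" using gn v by auto
  have lg: "length (g # ks) = Suc (Suc m)" using v by simp
  have "gdel n (Suc m) t (gd n (Suc m) \<psi>) ks = Nop (gd n (Suc m) \<psi>) (g # ks)"
    using True by (simp add: gdel_def g_def)
  also have "\<dots> = Nop (\<lambda>z. bsum n (\<lambda>x. \<psi> (tl x)) (0 # z)) (g # ks)"
  proof (rule Nop_cong)
    fix j assume j: "j < length (g # ks)"
    have lr: "length (rotate j (g # ks)) = Suc (Suc m)" using lg by simp
    have sr: "set (rotate j (g # ks)) \<subseteq> {..<n}" using gks by simp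
    show "gd n (Suc m) \<psi> (rotate j (g # ks)) = bsum n (\<lambda>x. \<psi> (tl x)) (0 # rotate j (g # ks))"
      using rd_gd[OF C lr sr, symmetric] rd_bsum[OF lr sr] by simp
  qed
  also have "\<dots> = - bsum n (Nop (\<lambda>z. \<psi> (tl (0 # z)))) (g # ks)"
    by (rule I4) (use lg gks in auto)
  also have "\<dots> = - bsum n (Nop \<psi>) (g # ks)" by simp
  also have "bsum n (Nop \<psi>) (g # ks) = bsum n (\<lambda>x. gdel n m t \<psi> (tl x)) (0 # ks)"
    unfolding bsum_def
  proof (rule sum.cong)
    fix i assume i: "i \<in> {..<length (0 # ks)}"
    define d where "d = dface n i (g # ks)"
    have ld: "length d = Suc m" unfolding d_def using lg by (simp add: length_dface)
    have sd: "set d \<subseteq> {..<n}" unfolding d_def by (rule set_dface[OF gks n]) (use lg in simp)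
    have dd: "d = hd d # tl d" using ld by (cases d) auto
    have td: "tl (dface n i (0 # ks)) = tl d" unfolding d_def using v by (intro tl_dface_indep) auto
    have sumd: "sum_list d mod n = (g + sum_list ks) mod n"
      unfolding d_def using sum_dface[of "g # ks" n i] lg by simp
    have e: "(hd d + t + sum_list (tl d)) mod n = 0"
    proof -
      have "(hd d + t + sum_list (tl d)) mod n = (t + sum_list d) mod n"
        by (subst dd) (simp add: add_ac)
      also have "\<dots> = (t + (g + sum_list ks)) mod n" using sumd by (metis mod_add_right_eq)
      also have "\<dots> = (g + t + sum_list ks) mod n" by (simp add: add_ac)
      also have "\<dots> = 0" unfolding g_def by (rule gval_sum[OF n])
      finally show ?thesis .
    qed
    have hdn: "hd d < n" using sd ld by (cases d) auto
    have tln: "set (tl d) \<subseteq> {..<n}" using sd by (cases d) auto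
    have X: "Nop \<psi> (hd d # tl d) = gdel n m t \<psi> (tl d)"
      by (rule Nop_head[OF n C hdn e]) (use ld tln in auto)
    then have "Nop \<psi> d = gdel n m t \<psi> (tl d)" by (simp only: dd[symmetric])
    then show "(-1) ^ i * Nop \<psi> (dface n i (g # ks)) = (-1) ^ i * gdel n m t \<psi> (tl (dface n i (0 # ks)))"
      unfolding td d_def by simp
  qed simp
  also have "\<dots> = rd n m (gdel n m t \<psi>) ks"
    by (rule rd_bsum[symmetric]) (use v in auto)
  also have "\<dots> = gd n m (gdel n m t \<psi>) ks"
    by (rule rd_gd[OF gdel_gC]) (use v in auto)
  finally show ?thesis .
qed


lemma mod_eq_sub_iff:
  "j < n \<Longrightarrow> a < n \<Longrightarrow> s < (n::nat) \<Longrightarrow> ((a + j) mod n = s) = (j = (s + n - a) mod n)"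
  by (subst mod_lt2, linarith, subst mod_lt2, linarith, auto)

lemma mod_inv1: "s < (n::nat) \<Longrightarrow> ((s + n - b mod n) mod n + b) mod n = s"
proof -
  assume s: "s < n"
  then have n: "0 < n" by simp
  have r: "b mod n < n" using n by simp
  have "((s + n - b mod n) mod n + b) mod n = ((s + n - b mod n) + b mod n) mod n"
    by (metis mod_add_eq mod_mod_trivial)
  also have "(s + n - b mod n) + b mod n = s + n" using r by simp
  finally show ?thesis using s by simp
qed

lemma mod_inv2: "t < (n::nat) \<Longrightarrow> ((t + b) mod n + n - b mod n) mod n = t"
proof -
  assume t: "t < n"
  then have n: "0 < n" by simp
  have key: "(((t + b) mod n + n - b mod n) mod n + b) mod n = (t + b) mod n"
    using mod_inv1[of "(t + b) mod n" n b] n by simp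
  have lt: "((t + b) mod n + n - b mod n) mod n < n" using n by simp
  have "(((t + b) mod n + n - b mod n) mod n + b) mod n = (t + b) mod n" by (rule key)
  then have "((t + b) mod n + n - b mod n) mod n mod n = t mod n"
    by (rule mod_add_cancel_aux)
  then show ?thesis using t lt by simp
qed

lemma sum_single_mod:
  assumes s: "s < n" and a: "a < (n::nat)"
  shows "(\<Sum>j<n. if (a + j) mod n = s then h j else 0) = h ((s + n - a) mod n)"
proof -
  have "(\<Sum>j<n. if (a + j) mod n = s then h j else 0) = (\<Sum>j<n. if j = (s + n - a) mod n then h j else 0)"
    by (rule sum.cong[OF refl]) (use mod_eq_sub_iff[OF _ a s] in auto)
  also have "\<dots> = h ((s + n - a) mod n)" using s by (simp add: sum.delta)
  finally show ?thesis .
qed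

lemma gmult_sig_l:
  assumes s: "s < n"
  shows "gmult n (sig n a) h s = h ((s + n - a mod n) mod n)"
proof -
  have n: "0 < n" using s by simp
  have "gmult n (sig n a) h s = (\<Sum>i<n. \<Sum>j<n. if (i + j) mod n = s then sig n a i * h j else 0)"
    using s by (simp add: gmult_def)
  also have "\<dots> = (\<Sum>i<n. if i = a mod n then (\<Sum>j<n. if (i + j) mod n = s then h j else 0) else 0)"
    by (rule sum.cong[OF refl]) (simp add: sig_def cong: if_cong)
  also have "\<dots> = (\<Sum>j<n. if (a mod n + j) mod n = s then h j else 0)"
    using n by (simp add: sum.delta)
  also have "\<dots> = h ((s + n - a mod n) mod n)" by (rule sum_single_mod[OF s]) (use n in simp)
  finally show ?thesis .
qed

lemma gmult_sig_r:
  assumes s: "s < n"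
  shows "gmult n g (sig n a) s = g ((s + n - a mod n) mod n)"
proof -
  have n: "0 < n" using s by simp
  have "gmult n g (sig n a) s = (\<Sum>i<n. \<Sum>j<n. if (i + j) mod n = s then g i * sig n a j else 0)"
    using s by (simp add: gmult_def)
  also have "\<dots> = (\<Sum>i<n. \<Sum>j<n. if j = a mod n then (if (i + j) mod n = s then g i else 0) else 0)"
    by (intro sum.cong refl) (simp add: sig_def cong: if_cong)
  also have "\<dots> = (\<Sum>i<n. if (a mod n + i) mod n = s then g i else 0)"
    using n by (simp add: sum.delta) (simp add: add.commute)
  also have "\<dots> = g ((s + n - a mod n) mod n)" by (rule sum_single_mod[OF s]) (use n in simp)
  finally show ?thesis .
qed

lemma gmult_sig_sig: assumes n0: "0 < n" shows "gmult n (sig n a) (sig n b) = (sig n (a + b) :: nat \<Rightarrow> 'r::comm_ring_1)"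
proof
  fix s
  show "gmult n (sig n a) (sig n b) s = (sig n (a + b) s :: 'r)"
  proof (cases "s < n")
    case False
    have "(a + b) mod n < n" using n0 by simp
    then have "s \<noteq> (a + b) mod n" using False by linarith
    then show ?thesis using False by (simp add: gmult_def sig_def)
  next
    case True
    then have n: "0 < n" by simp
    have "gmult n (sig n a) (sig n b) s = (sig n b ((s + n - a mod n) mod n) :: 'r)" by (rule gmult_sig_l[OF True])
    also have "\<dots> = (if b mod n = (s + n - a mod n) mod n then 1 else 0)" by (auto simp: sig_def)
    also have "(b mod n = (s + n - a mod n) mod n) = ((a mod n + b mod n) mod n = s)"
      using mod_eq_sub_iff[of "b mod n" n "a mod n" s] True n by simp
    also have "(a mod n + b mod n) mod n = (a + b) mod n" by (simp add: mod_add_eq)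
    finally show ?thesis by (auto simp: sig_def)
  qed
qed

lemma gmult_scale_l: "gmult n (\<lambda>t. c * g t) h = (\<lambda>t. c * gmult n g h t)"
  by (rule ext) (simp add: gmult_def sum_distrib_left mult.assoc if_distrib cong: if_cong)

lemma gmult_zero_l[simp]: "gmult n (\<lambda>t. 0) h = (\<lambda>t. 0)"
  by (rule ext) (simp add: gmult_def cong: if_cong)

lemma gmult_zero_r[simp]: "gmult n g (\<lambda>t. 0) = (\<lambda>t. 0)"
  by (rule ext) (simp add: gmult_def cong: if_cong)

definition coord :: "nat \<Rightarrow> (nat list \<Rightarrow> nat \<Rightarrow> 'r::comm_ring_1) \<Rightarrow> nat \<Rightarrow> nat list \<Rightarrow> 'r" where
  "coord n f t = (\<lambda>ks. f ks ((t + sum_list ks) mod n))"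

definition gring_all :: "nat \<Rightarrow> (nat list \<Rightarrow> nat \<Rightarrow> 'r::comm_ring_1) \<Rightarrow> bool" where
  "gring_all n F \<longleftrightarrow> (\<forall>ks s. n \<le> s \<longrightarrow> F ks s = 0)"

lemma coord_inj:
  assumes n: "0 < n" and F: "gring_all n F" and G: "gring_all n G"
    and e: "\<And>t ks. t < n \<Longrightarrow> coord n F t ks = coord n G t ks"
  shows "F = G"
proof (intro ext)
  fix ks s
  show "F ks s = G ks s"
  proof (cases "s < n")
    case False then show ?thesis using F G by (simp add: gring_all_def)
  next
    case True
    define t where "t = (s + n - sum_list ks mod n) mod n"
    have t: "t < n" using n by (simp add: t_def)
    have "(t + sum_list ks) mod n = s" unfolding t_def by (rule mod_inv1[OF True])
    then show ?thesis using e[OF t, of ks] by (simp add: coord_def)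
  qed
qed

definition untr :: "nat \<Rightarrow> (nat \<Rightarrow> nat list \<Rightarrow> 'r::comm_ring_1) \<Rightarrow> nat list \<Rightarrow> nat \<Rightarrow> 'r" where
  "untr n \<theta> = (\<lambda>ks s. if s < n then \<theta> ((s + n - sum_list ks mod n) mod n) ks else 0)"

lemma coord_untr: "t < n \<Longrightarrow> coord n (untr n \<theta>) t ks = \<theta> t ks"
  by (simp add: coord_def untr_def mod_inv2)

lemma untr_cochains:
  assumes "\<And>t. t < n \<Longrightarrow> \<theta> t \<in> gC n m"
  shows "untr n \<theta> \<in> cochains n m"
proof -
  have "\<theta> ((s + n - sum_list ks mod n) mod n) ks = 0" if "\<not> valid_idx n m ks" "s < n" for ks s
    using that by (intro gCD[OF assms]) simp_all
  then show ?thesis by (auto simp: cochains_def gring_def untr_def fun_eq_iff)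
qed

lemma cochainsD:
  assumes "f \<in> cochains n m"
  shows "\<And>ks s. n \<le> s \<Longrightarrow> f ks s = 0" "\<And>ks. \<not> valid_idx n m ks \<Longrightarrow> f ks = (\<lambda>_. 0)"
  using assms by (auto simp: cochains_def gring_def)

lemma coord_gC: "f \<in> cochains n m \<Longrightarrow> coord n f t \<in> gC n m"
  by (rule gCI) (simp add: coord_def cochainsD)

lemma cochains_gring_all: "f \<in> cochains n m \<Longrightarrow> gring_all n f"
  by (simp add: gring_all_def cochainsD)


lemma mod_sub_head: "a < (n::nat) \<Longrightarrow> ((t + (a + b)) mod n + n - a) mod n = (t + b) mod n"
proof -
  assume a: "a < n"
  have "((t + b) mod n + a) mod n = (t + (a + b)) mod n" by (simp only: mod_add_left_eq) (simp add: add_ac)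
  then have "(t + (a + b)) mod n = ((t + b) mod n + a) mod n" by simp
  then have "((t + (a + b)) mod n + n - a) mod n = (((t + b) mod n + a) mod n + n - a mod n) mod n"
    using a by simp
  also have "\<dots> = (t + b) mod n" using a by (intro mod_inv2) simp
  finally show ?thesis .
qed

lemma mrg_dface: "1 \<le> i \<Longrightarrow> i < length ks \<Longrightarrow> mrg n ks i = dface n (i - 1) ks"
  by (simp add: mrg_def dface_def)

lemma sum_mrg: "1 \<le> i \<Longrightarrow> i < length ks \<Longrightarrow> sum_list (mrg n ks i) mod n = sum_list ks mod n"
  using sum_dface[of ks n "i - 1"] by (simp add: mrg_dface)

lemma coord_hdiff:
  assumes f: "f \<in> cochains n m" and t: "t < n"
  shows "coord n (hdiff n m f) t ks = gd n m (coord n f t) ks"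
proof (cases "valid_idx n (Suc m) ks")
  case False
  then show ?thesis by (simp add: coord_def hdiff_def gd_def)
next
  case True
  note v = valid_idxD[OF True]
  have n: "0 < n" using t by simp
  define s where "s = (t + sum_list ks) mod n"
  have s: "s < n" using n by (simp add: s_def)
  have ne: "ks \<noteq> []" using v by auto
  have hdn: "hd ks < n" using v ne by (cases ks) auto
  have lastn: "last ks < n" using v ne last_in_set by blast
  have sum_ht: "sum_list ks = hd ks + sum_list (tl ks)" using ne by (cases ks) auto
  have sum_bl: "sum_list ks = last ks + sum_list (butlast ks)"
    using ne by (metis append_butlast_last_id sum_list_append sum_list.Cons sum_list.Nil add.commute add_0_right)
  have t1: "gmult n (sig n (hd ks)) (f (tl ks)) s = coord n f t (tl ks)"
  proof -
    have "gmult n (sig n (hd ks)) (f (tl ks)) s = f (tl ks) ((s + n - hd ks mod n) mod n)" by (rule gmult_sig_l[OF s])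
    also have "(s + n - hd ks mod n) mod n = (t + sum_list (tl ks)) mod n"
      unfolding s_def sum_ht using hdn by (simp add: mod_sub_head)
    finally show ?thesis by (simp add: coord_def)
  qed
  have t3: "gmult n (f (butlast ks)) (sig n (last ks)) s = coord n f t (butlast ks)"
  proof -
    have "gmult n (f (butlast ks)) (sig n (last ks)) s = f (butlast ks) ((s + n - last ks mod n) mod n)" by (rule gmult_sig_r[OF s])
    also have "(s + n - last ks mod n) mod n = (t + sum_list (butlast ks)) mod n"
      unfolding s_def sum_bl using lastn by (simp add: mod_sub_head)
    finally show ?thesis by (simp add: coord_def)
  qed
  have t2: "f (take (i - Suc 0) ks @ (ks ! (i - Suc 0) + ks ! i) mod n # drop (Suc i) ks) s = coord n f t (mrg n ks i)"
    if i1: "Suc 0 \<le> i" and i2: "i \<le> m" for i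
  proof -
    have "(t + sum_list (mrg n ks i)) mod n = s"
      unfolding s_def using sum_mrg[of i ks n] i1 i2 v by (metis One_nat_def le_imp_less_Suc mod_add_right_eq)
    then show ?thesis by (simp add: coord_def mrg_def)
  qed
  have sm: "(\<Sum>i\<in>{1..m}. (-1) ^ i * f (take (i - 1) ks @ [(ks ! (i - 1) + ks ! i) mod n] @ drop (i + 1) ks) s)
      = (\<Sum>i\<in>{1..m}. (-1) ^ i * coord n f t (mrg n ks i))"
  proof (rule sum.cong[OF refl])
    fix i assume "i \<in> {1..m}"
    then show "(-1) ^ i * f (take (i - 1) ks @ [(ks ! (i - 1) + ks ! i) mod n] @ drop (i + 1) ks) s
      = (-1) ^ i * coord n f t (mrg n ks i)" using t2[of i] by simp
  qed
  have "coord n (hdiff n m f) t ks = hdiff n m f ks s" by (simp add: coord_def s_def)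
  also have "\<dots> = gmult n (sig n (hd ks)) (f (tl ks)) s
      + (\<Sum>i\<in>{1..m}. (-1) ^ i * f (take (i - 1) ks @ [(ks ! (i - 1) + ks ! i) mod n] @ drop (i + 1) ks) s)
      + (-1) ^ Suc m * gmult n (f (butlast ks)) (sig n (last ks)) s"
    using True by (simp add: hdiff_def)
  also have "\<dots> = coord n f t (tl ks) + (\<Sum>i\<in>{1..m}. (-1) ^ i * coord n f t (mrg n ks i))
      + (-1) ^ Suc m * coord n f t (butlast ks)"
    unfolding t1 t3 sm ..
  also have "\<dots> = gd n m (coord n f t) ks" using True by (simp add: gd_def rd_def)
  finally show ?thesis .
qed

lemma hdiff_gring_all:
  assumes f: "f \<in> cochains n m"
  shows "gring_all n (hdiff n m f)"
  unfolding gring_all_def hdiff_def using cochainsD(1)[OF f] by (auto simp: gmult_def)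

lemma zero_gring_all: "gring_all n (\<lambda>_ _. 0)"
  by (simp add: gring_all_def)

lemma cocycles_iff:
  assumes n: "0 < n"
  shows "f \<in> cocycles n m \<longleftrightarrow> f \<in> cochains n m \<and> (\<forall>t<n. \<forall>ks. gd n m (coord n f t) ks = 0)"
proof
  assume "f \<in> cocycles n m"
  then have f: "f \<in> cochains n m" and h: "hdiff n m f = (\<lambda>_ _. 0)" by (auto simp: cocycles_def)
  have "gd n m (coord n f t) ks = 0" if "t < n" for t ks
    using coord_hdiff[OF f that, of ks] h by (simp add: coord_def)
  then show "f \<in> cochains n m \<and> (\<forall>t<n. \<forall>ks. gd n m (coord n f t) ks = 0)" using f by blast
next
  assume a: "f \<in> cochains n m \<and> (\<forall>t<n. \<forall>ks. gd n m (coord n f t) ks = 0)"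
  have "hdiff n m f = (\<lambda>_ _. 0)"
  proof (rule coord_inj[OF n hdiff_gring_all zero_gring_all])
    show "f \<in> cochains n m" using a by blast
    fix t ks assume "t < n"
    then show "coord n (hdiff n m f) t ks = coord n (\<lambda>_ _. 0) t ks"
      using coord_hdiff[of f n m t ks] a by (simp add: coord_def)
  qed
  then show "f \<in> cocycles n m" using a by (simp add: cocycles_def)
qed

lemma cob_from_coords:
  assumes n: "0 < n" and m: "1 \<le> m" and f: "gring_all n f"
    and c: "\<And>t. t < n \<Longrightarrow> \<exists>\<theta> \<in> gC n (m - 1). \<forall>ks. coord n f t ks = gd n (m - 1) \<theta> ks"
  shows "f \<in> coboundaries n m"
proof -
  define \<Theta> where "\<Theta> t = (SOME \<theta>. \<theta> \<in> gC n (m - 1) \<and> (\<forall>ks. coord n f t ks = gd n (m - 1) \<theta> ks))" for t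
  have \<Theta>: "\<Theta> t \<in> gC n (m - 1) \<and> (\<forall>ks. coord n f t ks = gd n (m - 1) (\<Theta> t) ks)" if "t < n" for t
  proof -
    have ex: "\<exists>\<theta>. \<theta> \<in> gC n (m - 1) \<and> (\<forall>ks. coord n f t ks = gd n (m - 1) \<theta> ks)"
      using c[OF that] by blast
    show ?thesis unfolding \<Theta>_def by (rule someI_ex[OF ex])
  qed
  define g where "g = untr n \<Theta>"
  have g: "g \<in> cochains n (m - 1)" unfolding g_def by (rule untr_cochains) (use \<Theta> in blast)
  have "hdiff n (m - 1) g = f"
  proof (rule coord_inj[OF n hdiff_gring_all[OF g] f])
    fix t ks assume t: "t < n"
    show "coord n (hdiff n (m - 1) g) t ks = coord n f t ks"
      using coord_hdiff[OF g t, of ks] \<Theta>[OF t] coord_untr[OF t, of \<Theta>] unfolding g_def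
      by (metis ext)
  qed
  then show ?thesis using m g by (auto simp: coboundaries_def)
qed

lemma coords_of_cob:
  assumes n: "0 < n" and m: "1 \<le> m" and f: "f \<in> coboundaries n m" and t: "t < n"
  shows "\<exists>\<theta> \<in> gC n (m - 1). \<forall>ks. coord n f t ks = gd n (m - 1) \<theta> ks"
proof -
  obtain g where g: "g \<in> cochains n (m - 1)" "f = hdiff n (m - 1) g"
    using f m by (auto simp: coboundaries_def)
  show ?thesis using coord_hdiff[OF g(1) t] coord_gC[OF g(1)] g(2) by blast
qed

lemma zero_from_coords:
  assumes n: "0 < n" and f: "gring_all n f" and c: "\<And>t ks. t < n \<Longrightarrow> coord n f t ks = 0"
  shows "f = (\<lambda>_ _. 0)"
  by (rule coord_inj[OF n f zero_gring_all]) (use c in \<open>simp add: coord_def\<close>)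


lemma gmult_scale_r: "gmult n g (\<lambda>t. c * h t) = (\<lambda>t. c * gmult n g h t)"
  by (rule ext) (simp add: gmult_def sum_distrib_left algebra_simps if_distrib cong: if_cong)

lemma xpow_closed: "0 < n \<Longrightarrow> xpow n i = (\<lambda>ks. if ks = [] then sig n i else (\<lambda>_. 0))"
proof (induction i)
  case 0 then show ?case by (simp add: unit_cochain_def)
next
  case (Suc i)
  show ?case
    by (rule ext) (simp add: Suc cup_def x_cochain_def gmult_sig_sig[OF Suc.prems])
qed

lemma zpow_closed:
  assumes n: "0 < n"
  shows "zpow n k = (\<lambda>ks s. (-1) ^ k * upow n k ks * (sig n (sum_list ks) s :: 'r::comm_ring_1))"
proof (induction k)
  case 0
  show ?case by (rule ext)+ (simp add: unit_cochain_def)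
next
  case (Suc k)
  show ?case
  proof (rule ext)+
    fix ks s
    show "zpow n (Suc k) ks s = (-1) ^ Suc k * upow n (Suc k) ks * (sig n (sum_list ks) s :: 'r)"
    proof (cases "length ks = 2 + 2 * k")
      case False
      then have "\<not> valid_idx n (Suc (Suc (2 * k))) ks" by (auto simp: valid_idx_def)
      then show ?thesis using False by (simp add: cup_def ucup_def)
    next
      case True
      then obtain a b r where ks: "ks = a # b # r" and lr: "length r = 2 * k"
        by (metis add_2_eq_Suc length_Suc_conv)
      have zp: "zpow n k r = (\<lambda>s. (-1) ^ k * upow n k r * (sig n (sum_list r) s :: 'r))"
        using Suc.IH by simp
      show ?thesis
      proof (cases "valid_idx n 2 [a, b] \<and> n \<le> a + b")
        case False
        then have u: "upow n (Suc k) ks = (0::'r)" using ks by (auto simp: ucup_def valid_idx_def)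
        have "z_cochain n [a, b] = (\<lambda>_. (0::'r))" using False by (auto simp: z_cochain_def)
        then show ?thesis using ks u by (simp add: cup_def)
      next
        case c: True
        have zab: "z_cochain n [a, b] = (\<lambda>t. (-1) * (sig n (a + b - n) t :: 'r))"
          using c by (simp add: z_cochain_def)
        have sg: "sig n (a + b - n + sum_list r) = (sig n (sum_list ks) :: nat \<Rightarrow> 'r)"
        proof -
          have e: "a + b + sum_list r = (a + b - n + sum_list r) + n" using c by simp
          have "(a + b - n + sum_list r) mod n = (a + b + sum_list r) mod n"
            unfolding e by simp
          then show ?thesis using ks by (simp add: sig_def add.assoc)
        qed
        have u: "upow n (Suc k) ks = (upow n k r :: 'r)"
        proof (cases "valid_idx n (2 * k) r")
          case True then show ?thesis using c ks lr by (auto simp: ucup_def valid_idx_def)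
        next
          case False
          then have "upow n k r = (0::'r)" by (rule gCD[OF upow_gC])
          then show ?thesis using ks by (simp add: ucup_def)
        qed
        have "zpow n (Suc k) ks = gmult n (z_cochain n [a, b]) (zpow n k r)"
          using ks lr by (simp add: cup_def)
        also have "\<dots> = gmult n (\<lambda>t. (-1) * (sig n (a + b - n) t :: 'r)) (\<lambda>s. ((-1) ^ k * upow n k r) * sig n (sum_list r) s)"
          by (simp only: zab zp)
        also have "\<dots> = (\<lambda>t. (-1) * ((-1) ^ k * upow n k r * gmult n (sig n (a + b - n)) (sig n (sum_list r)) t))"
          by (simp only: gmult_scale_l gmult_scale_r)
        also have "gmult n (sig n (a + b - n)) (sig n (sum_list r)) = (sig n (sum_list ks) :: nat \<Rightarrow> 'r)"
          using gmult_sig_sig[OF n, of "a + b - n" "sum_list r", where 'r='r] sg by simp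
        finally show ?thesis using u by simp
      qed
    qed
  qed
qed

lemma monom_closed:
  assumes n: "0 < n"
  shows "monom n i k = (\<lambda>ks s. (-1) ^ k * upow n k ks * (sig n (i + sum_list ks) s :: 'r::comm_ring_1))"
proof (rule ext)+
  fix ks s
  show "monom n i k ks s = (-1) ^ k * upow n k ks * (sig n (i + sum_list ks) s :: 'r)"
  proof (cases "length ks = 2 * k")
    case False
    then have "\<not> valid_idx n (2 * k) ks" by (auto simp: valid_idx_def)
    then have "upow n k ks = (0::'r)" by (rule gCD[OF upow_gC])
    then show ?thesis using False by (simp add: monom_def cup_def)
  next
    case True
    have "monom n i k ks = gmult n (sig n i) (\<lambda>s. (-1) ^ k * upow n k ks * (sig n (sum_list ks) s :: 'r))"
      using True by (simp add: monom_def cup_def xpow_closed[OF n] zpow_closed[OF n])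
    also have "\<dots> = (\<lambda>s. (-1) ^ k * upow n k ks * sig n (i + sum_list ks) s)"
      unfolding gmult_scale_r gmult_sig_sig[OF n] ..
    finally show ?thesis by simp
  qed
qed

lemma coord_monom:
  assumes t: "t < n"
  shows "coord n (monom n i k) t ks = (if t = i mod n then (-1) ^ k * upow n k ks else (0::'r::comm_ring_1))"
proof -
  have n: "0 < n" using t by simp
  have "((t + sum_list ks) mod n = (i + sum_list ks) mod n) = (t = i mod n)"
  proof
    assume "(t + sum_list ks) mod n = (i + sum_list ks) mod n"
    then have "t mod n = i mod n" by (rule mod_add_cancel_aux)
    then show "t = i mod n" using t by simp
  next
    assume "t = i mod n"
    then show "(t + sum_list ks) mod n = (i + sum_list ks) mod n" by (simp add: mod_add_left_eq)
  qed
  then show ?thesis unfolding coord_def monom_closed[OF n] by (auto simp: sig_def)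
qed

lemma monom_cochains: "0 < n \<Longrightarrow> (monom n i k :: nat list \<Rightarrow> nat \<Rightarrow> 'r::comm_ring_1) \<in> cochains n (2 * k)"
proof -
  assume n: "0 < n"
  have a: "(sig n j s :: 'r) = 0" if "n \<le> s" for j s
    using that n by (auto simp: sig_def) (metis mod_less_divisor not_le)
  have b: "upow n k ks = (0::'r)" if "\<not> valid_idx n (2 * k) ks" for ks
    using that by (rule gCD[OF upow_gC])
  show ?thesis unfolding cochains_def gring_def monom_closed[OF n] using a b by auto
qed

lemma monom_gring_all: "0 < n \<Longrightarrow> gring_all n (monom n i k :: nat list \<Rightarrow> nat \<Rightarrow> 'r::comm_ring_1)"
  by (rule cochains_gring_all[OF monom_cochains])

lemma lincomb_gring_all:
  assumes n: "0 < n" shows "gring_all n (lincomb n k (c :: nat \<Rightarrow> 'r::comm_ring_1))"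
proof -
  have "(monom n i k ks s :: 'r) = 0" if "n \<le> s" for i ks s
    using monom_gring_all[OF n, of i k, where 'r='r] that by (simp add: gring_all_def)
  then show ?thesis by (simp add: gring_all_def lincomb_def)
qed

lemma coord_lincomb:
  assumes t: "t < n"
  shows "coord n (lincomb n k c) t ks = c t * ((-1) ^ k * upow n k ks)"
proof -
  have "coord n (lincomb n k c) t ks = (\<Sum>i<n. c i * coord n (monom n i k) t ks)"
    by (simp add: coord_def lincomb_def)
  also have "\<dots> = (\<Sum>i<n. if i = t then c i * ((-1) ^ k * upow n k ks) else 0)"
    by (rule sum.cong[OF refl]) (use t in \<open>auto simp: coord_monom\<close>)
  also have "\<dots> = c t * ((-1) ^ k * upow n k ks)" using t by (simp add: sum.delta')
  finally show ?thesis .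
qed

lemma cminus_gring_all: "gring_all n f \<Longrightarrow> gring_all n g \<Longrightarrow> gring_all n (cminus f g)"
  by (simp add: gring_all_def cminus_def)

lemma coord_cminus: "coord n (cminus f g) t ks = coord n f t ks - coord n g t ks"
  by (simp add: coord_def cminus_def)


lemma sum_rotate: "sum_list (rotate i xs) = (sum_list xs :: nat)"
  by (simp add: rotate_drop_take add.commute flip: sum_list_append)
    (metis append_take_drop_id sum_list_append add.commute)

lemma rot_form:
  assumes "length ks = m" "1 \<le> i" "i \<le> Suc m"
  shows "drop (i - 1) ks @ [g] @ take (i - 1) ks = rotate i (g # ks)"
proof (cases "i = Suc m")
  case True
  then show ?thesis using assms by (subst rotate_id) simp_all
next
  case False
  then have "i mod Suc m = i" using assms by simp
  then show ?thesis using assms by (cases i) (auto simp: rotate_drop_take)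
qed

lemma sig_eq_iff: "j < n \<Longrightarrow> s < n \<Longrightarrow> (s = (n - j) mod n) = (j = (n - s) mod (n::nat))"
  by (cases "j = 0"; cases "s = 0") auto

lemma coord_bv:
  assumes f: "f \<in> cochains n (Suc m)" and t: "t < n"
  shows "coord n (bv_delta n m f) t ks = gdel n m t (coord n f t) ks"
proof (cases "valid_idx n m ks")
  case False
  then show ?thesis by (simp add: coord_def bv_delta_def gdel_def)
next
  case True
  note v = valid_idxD[OF True]
  have n: "0 < n" using t by simp
  define s where "s = (t + sum_list ks) mod n"
  have s: "s < n" using n by (simp add: s_def)
  define g0 where "g0 = gval n t ks"
  have g0: "g0 = (n - s) mod n" by (simp add: g0_def gval_def s_def)
  have g0n: "g0 < n" using n by (simp add: g0)
  define X where "X j = (\<Sum>i\<in>{1..Suc m}. (-1) ^ (i * m) * f (drop (i - 1) ks @ [j] @ take (i - 1) ks) 0)" for j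
  have "coord n (bv_delta n m f) t ks = (\<Sum>j<n. \<Sum>i\<in>{1..Suc m}.
      (-1) ^ (i * m) * f (drop (i - 1) ks @ [j] @ take (i - 1) ks) 0 * sig n (n - j) s)"
    using True by (simp add: coord_def bv_delta_def s_def)
  also have "\<dots> = (\<Sum>j<n. if j = g0 then X j else 0)"
  proof (rule sum.cong[OF refl])
    fix j assume j: "j \<in> {..<n}"
    have "sig n (n - j) s = (if j = g0 then 1 else (0::'a))"
      using sig_eq_iff[of j n s] j s by (auto simp: sig_def g0)
    then show "(\<Sum>i\<in>{1..Suc m}. (-1) ^ (i * m) * f (drop (i - 1) ks @ [j] @ take (i - 1) ks) 0 * sig n (n - j) s)
        = (if j = g0 then X j else 0)"
      by (simp add: X_def sum_distrib_right)
  qed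
  also have "\<dots> = X g0" using g0n by (simp add: sum.delta)
  also have "\<dots> = (\<Sum>i\<in>{1..Suc m}. (-1) ^ (i * m) * coord n f t (rotate i (g0 # ks)))"
    unfolding X_def
  proof (rule sum.cong[OF refl])
    fix i assume i: "i \<in> {1..Suc m}"
    have L: "drop (i - 1) ks @ [g0] @ take (i - 1) ks = rotate i (g0 # ks)"
      by (rule rot_form) (use v i in auto)
    have "(t + sum_list (rotate i (g0 # ks))) mod n = 0"
      using gval_sum[OF n, of t ks] unfolding sum_rotate g0_def by (simp add: add_ac)
    then show "(-1) ^ (i * m) * f (drop (i - 1) ks @ [g0] @ take (i - 1) ks) 0
        = (-1) ^ (i * m) * coord n f t (rotate i (g0 # ks))"
      unfolding L by (simp add: coord_def)
  qed
  also have "\<dots> = Nop (coord n f t) (g0 # ks)"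
  proof -
    define h where "h i = (-1) ^ (i * m) * coord n f t (rotate i (g0 # ks))" for i
    have h0: "h (Suc m) = h 0"
    proof -
      have "rotate (Suc m) (g0 # ks) = g0 # ks" using v by (intro rotate_id) simp
      moreover have "(-1::'a) ^ (Suc m * m) = 1" by (simp add: minus_one_power_iff)
      ultimately show ?thesis by (simp add: h_def)
    qed
    have "(\<Sum>i\<in>{1..Suc m}. h i) = (\<Sum>i<Suc m. h (Suc i))"
      by (rule sum.reindex_bij_witness[where i = Suc and j = "\<lambda>i. i - 1"]) auto
    also have "\<dots> = (\<Sum>i<m. h (Suc i)) + h (Suc m)" by simp
    also have "\<dots> = h 0 + (\<Sum>i<m. h (Suc i))" using h0 by simp
    also have "\<dots> = (\<Sum>i<Suc m. h i)" by (rule sum.lessThan_Suc_shift[symmetric])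
    finally show ?thesis unfolding h_def Nop_def using v by simp
  qed
  also have "\<dots> = gdel n m t (coord n f t) ks" using True by (simp add: gdel_def g0_def)
  finally show ?thesis .
qed

lemma bv_gring_all:
  assumes n: "0 < n" shows "gring_all n (bv_delta n m f)"
proof -
  have "(sig n j s :: 'a::comm_ring_1) = 0" if "n \<le> s" for j s
    using that n by (auto simp: sig_def) (metis mod_less_divisor not_le)
  then show ?thesis by (simp add: gring_all_def bv_delta_def)
qed


lemma gC_n1: "1 \<le> m \<Longrightarrow> \<phi> \<in> gC (Suc 0) m \<Longrightarrow> \<phi> ks = 0"
  by (erule gCD) (auto simp: valid_idx_def)

lemma Zodd_all:
  fixes \<phi> :: "nat list \<Rightarrow> 'r::idom"
  assumes n: "1 \<le> n" and nz: "of_nat n \<noteq> (0::'r)"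
    and C: "\<phi> \<in> gC n (Suc (2 * k))" and cy: "\<And>ks. gd n (Suc (2 * k)) \<phi> ks = 0"
  shows "\<exists>g \<in> gC n (2 * k). \<forall>ks. \<phi> ks = gd n (2 * k) g ks"
proof (cases "n = 1")
  case True
  then have z: "\<phi> ks = 0" for ks using gC_n1[of "Suc (2 * k)" \<phi> ks] C by simp
  show ?thesis by (rule bexI[of _ "\<lambda>l. 0"]) (simp_all add: gC_0 z)
next
  case False
  then show ?thesis using Zodd[of n \<phi> k] n nz C cy by simp
qed

lemma Zeven_all:
  fixes \<phi> :: "nat list \<Rightarrow> 'r::idom"
  assumes n: "1 \<le> n" and nz: "of_nat n \<noteq> (0::'r)"
    and C: "\<phi> \<in> gC n (2 * k)" and cy: "\<And>ks. gd n (2 * k) \<phi> ks = 0"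
  shows "\<exists>c. cob n (2 * k) (\<lambda>ks. \<phi> ks - c * upow n k ks)"
proof (cases "n = 1")
  case False
  then show ?thesis using Zeven[of n \<phi> k] n nz C cy by simp
next
  case True
  show ?thesis
  proof (cases k)
    case 0
    have C0: "\<phi> \<in> gC n 0" using C 0 by simp
    have F: "\<phi> ks - \<phi> [] * upow n 0 ks = 0" for ks
    proof (cases "ks = []")
      case False
      then have "\<not> valid_idx n 0 ks" by (simp add: valid_idx_def)
      then show ?thesis using gCD[OF C0] False by simp
    qed simp
    have "cob n (2 * 0) (\<lambda>ks. \<phi> ks - \<phi> [] * upow n 0 ks)"
      by (simp only: cob_def mult_0_right if_True simp_thms) (rule allI, rule F)
    then show ?thesis using 0 by blast
  next
    case (Suc k')
    have "\<phi> ks = 0" for ks using gC_n1[of "2 * k" \<phi> ks] C True Suc by simp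
    moreover have "upow n k ks = (0::'r)" for ks using gC_n1[of "2 * k" "upow n k" ks] upow_gC[of n k] True Suc by simp
    ultimately have "cob n (2 * k) (\<lambda>ks. \<phi> ks - 0 * upow n k ks)"
      using Suc gC_0[of n "Suc (2 * k')"] by (auto simp: cob_def intro!: bexI[of _ "\<lambda>l. 0"])
    then show ?thesis by blast
  qed
qed

lemma gdel_zero: "gdel n m t (\<lambda>_. (0::'r::comm_ring_1)) ks = 0"
  by (simp add: gdel_def Nop_def)

lemma BV_group:
  fixes \<phi> :: "nat list \<Rightarrow> 'r::idom"
  assumes n: "1 \<le> n" and nz: "of_nat n \<noteq> (0::'r)"
    and C: "\<phi> \<in> gC n (Suc m)" and cy: "\<And>ks. gd n (Suc m) \<phi> ks = 0"
  shows "(m = 0 \<longrightarrow> (\<forall>ks. gdel n m t \<phi> ks = 0)) \<and>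
         (1 \<le> m \<longrightarrow> (\<exists>\<theta> \<in> gC n (m - 1). \<forall>ks. gdel n m t \<phi> ks = gd n (m - 1) \<theta> ks))"
proof (cases "n = 1")
  case True
  have z: "\<phi> = (\<lambda>_. 0)" using gC_n1[of "Suc m" \<phi>] C True by auto
  show ?thesis using z gC_0[of n "m - 1"] by (auto simp: gdel_zero intro!: bexI[of _ "\<lambda>l. 0"])
next
  case False
  then have n2: "1 < n" using n by simp
  have n0: "0 < n" using n by simp
  show ?thesis
  proof (cases m)
    case 0
    have z: "\<phi> = (\<lambda>_. 0)" using Z1[OF n2 nz, of \<phi>] C cy 0 by auto
    then show ?thesis using 0 by (simp add: gdel_zero)
  next
    case (Suc m')
    have goal: "\<exists>\<theta> \<in> gC n (m - 1). \<forall>ks. gdel n m t \<phi> ks = gd n (m - 1) \<theta> ks"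
    proof (cases "even m")
      case False
      then obtain j where mj: "m = Suc (2 * j)" by (metis oddE Suc_eq_plus1)
      have gz: "gd n (Suc m) \<phi> = (\<lambda>_. 0)" using cy by auto
      have cyc: "gd n m (gdel n m t \<phi>) ks = 0" for ks
        using gdel_gd[OF n0 C, of t ks] gz by (simp add: gdel_zero)
      obtain g where g: "g \<in> gC n (2 * j)" "\<forall>ks. gdel n m t \<phi> ks = gd n (2 * j) g ks"
        using Zodd[OF n2 nz, of "gdel n m t \<phi>" j] gdel_gC[of n m t \<phi>] cyc mj by auto
      then show ?thesis using mj by auto
    next
      case True
      then obtain j where mj: "m = 2 * j" by blast
      have j: "1 \<le> j" using mj Suc by simp
      obtain \<theta>0 where t0: "\<theta>0 \<in> gC n (2 * j)" "\<forall>ks. \<phi> ks = gd n (2 * j) \<theta>0 ks"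
        using Zodd[OF n2 nz, of \<phi> j] C cy mj by auto
      define j' where "j' = 2 * j - 1"
      have jj: "2 * j = Suc j'" using j unfolding j'_def by simp
      have t0': "\<theta>0 \<in> gC n (Suc j')" using t0(1) jj by simp
      have pe: "\<phi> = gd n (Suc j') \<theta>0" using t0(2) jj by (intro ext) simp
      have "gdel n m t \<phi> ks = gd n j' (\<lambda>l. - gdel n j' t \<theta>0 l) ks" for ks
        using gdel_gd[OF n0 t0', of t ks] gd_scale[of n j' "-1" "gdel n j' t \<theta>0" ks] mj jj pe by simp
      moreover have "(\<lambda>l. - gdel n j' t \<theta>0 l) \<in> gC n j'" by (rule gC_uminus[OF gdel_gC])
      ultimately show ?thesis using mj jj by auto
    qed
    then show ?thesis using Suc by simp
  qed
qed


lemma nU_cob: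
  "of_nat n * (upow n (Suc k') ks :: 'r::comm_ring_1) = gd n (Suc (2 * k')) (tsum n (Suc (2 * k')) (upow n (Suc k') :: nat list \<Rightarrow> 'r)) (ks :: nat list) \<and>
   tsum n (Suc (2 * k')) (upow n (Suc k') :: nat list \<Rightarrow> 'r) \<in> gC n (Suc (2 * k'))"
proof
  have C: "(upow n (Suc k') :: nat list \<Rightarrow> 'r) \<in> gC n (Suc (Suc (2 * k')))" using upow_gC[of n "Suc k'"] by simp
  have z: "gd n (Suc (Suc (2 * k'))) (upow n (Suc k') :: nat list \<Rightarrow> 'r) = (\<lambda>_. 0)"
    using upow_cyc[of n "Suc k'"] by (intro ext) simp
  have t0: "tsum n (Suc (Suc (2 * k'))) (\<lambda>_. (0::'r)) ks = 0" by (simp add: tsum_def)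
  show "of_nat n * (upow n (Suc k') ks :: 'r) = gd n (Suc (2 * k')) (tsum n (Suc (2 * k')) (upow n (Suc k') :: nat list \<Rightarrow> 'r)) ks"
  proof -
    have h: "gd n (Suc (2 * k')) (tsum n (Suc (2 * k')) (upow n (Suc k') :: nat list \<Rightarrow> 'r)) ks = of_nat n * (upow n (Suc k') ks :: 'r)"
      using tsum_gd[OF C, of ks] z t0 by simp
    show ?thesis by (rule h[symmetric])
  qed
  show "tsum n (Suc (2 * k')) (upow n (Suc k') :: nat list \<Rightarrow> 'r) \<in> gC n (Suc (2 * k'))" by (rule tsum_gC)
qed

theorem mainTheorem1:
  fixes n :: nat
  assumes "n \<ge> 1"
    and "\<not> CHAR('r::idom) dvd n"
  shows
    \<comment> \<open>the generators and their monomials are cocycles\<close>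
    "(\<forall>i k. (monom n i k :: nat list \<Rightarrow> nat \<Rightarrow> 'r) \<in> cocycles n (2 * k))
     \<comment> \<open>surjectivity of R[x,z] -> HH^*: HH^odd = 0, HH^(2k) spanned by x^i z^k, i<n\<close>
     \<and> (\<forall>k. \<forall>f \<in> (cocycles n (2 * k + 1) :: (nat list \<Rightarrow> nat \<Rightarrow> 'r) set).
           f \<in> coboundaries n (2 * k + 1))
     \<and> (\<forall>k. \<forall>f \<in> (cocycles n (2 * k) :: (nat list \<Rightarrow> nat \<Rightarrow> 'r) set).
           \<exists>c. cminus f (lincomb n k c) \<in> coboundaries n (2 * k))
     \<comment> \<open>kernel is exactly (x^n - 1, n z)\<close>
     \<and> (\<forall>k (c :: nat \<Rightarrow> 'r). lincomb n k c \<in> coboundaries n (2 * k) \<longleftrightarrow>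
           (if k = 0 then (\<forall>i<n. c i = 0) else (\<forall>i<n. of_nat n dvd c i)))
     \<comment> \<open>Delta vanishes on HH^*\<close>
     \<and> (\<forall>m. \<forall>f \<in> (cocycles n (Suc m) :: (nat list \<Rightarrow> nat \<Rightarrow> 'r) set).
           bv_delta n m f \<in> coboundaries n m)"
proof -
  have n1: "1 \<le> n" using assms(1) .
  have n0: "0 < n" using n1 by simp
  have nz: "of_nat n \<noteq> (0::'r)" using assms(2) by (simp add: of_nat_eq_0_iff_char_dvd)
  have cob0: "coboundaries n 0 = {(\<lambda>_ _. 0)}" by (simp add: coboundaries_def)

  have P1: "\<forall>i k. (monom n i k :: nat list \<Rightarrow> nat \<Rightarrow> 'r) \<in> cocycles n (2 * k)"
  proof (intro allI)
    fix i k
    show "(monom n i k :: nat list \<Rightarrow> nat \<Rightarrow> 'r) \<in> cocycles n (2 * k)"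
      unfolding cocycles_iff[OF n0]
    proof (intro conjI allI impI)
      show "(monom n i k :: nat list \<Rightarrow> nat \<Rightarrow> 'r) \<in> cochains n (2 * k)" by (rule monom_cochains[OF n0])
      fix t ks assume t: "t < n"
      have e: "coord n (monom n i k :: nat list \<Rightarrow> nat \<Rightarrow> 'r) t = (\<lambda>ks. (if t = i mod n then (-1) ^ k else 0) * upow n k ks)"
        by (rule ext) (simp add: coord_monom[OF t])
      show "gd n (2 * k) (coord n (monom n i k :: nat list \<Rightarrow> nat \<Rightarrow> 'r) t) ks = 0"
        unfolding e gd_scale upow_cyc by simp
    qed
  qed

  have P2: "\<forall>k. \<forall>f \<in> (cocycles n (2 * k + 1) :: (nat list \<Rightarrow> nat \<Rightarrow> 'r) set). f \<in> coboundaries n (2 * k + 1)"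
  proof (intro allI ballI)
    fix k and f :: "nat list \<Rightarrow> nat \<Rightarrow> 'r"
    assume "f \<in> cocycles n (2 * k + 1)"
    then have f: "f \<in> cochains n (Suc (2 * k))" and cy: "\<And>t ks. t < n \<Longrightarrow> gd n (Suc (2 * k)) (coord n f t) ks = 0"
      unfolding cocycles_iff[OF n0] by auto
    show "f \<in> coboundaries n (2 * k + 1)"
    proof (rule cob_from_coords[OF n0 _ cochains_gring_all[OF f]])
      fix t assume t: "t < n"
      show "\<exists>\<theta>\<in>gC n (2 * k + 1 - 1). \<forall>ks. coord n f t ks = gd n (2 * k + 1 - 1) \<theta> ks"
        using Zodd_all[OF n1 nz coord_gC[OF f] cy[OF t]] by simp
    qed simp
  qed

  have P3: "\<forall>k. \<forall>f \<in> (cocycles n (2 * k) :: (nat list \<Rightarrow> nat \<Rightarrow> 'r) set).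
           \<exists>c. cminus f (lincomb n k c) \<in> coboundaries n (2 * k)"
  proof (intro allI ballI)
    fix k and f :: "nat list \<Rightarrow> nat \<Rightarrow> 'r"
    assume "f \<in> cocycles n (2 * k)"
    then have f: "f \<in> cochains n (2 * k)" and cy: "\<And>t ks. t < n \<Longrightarrow> gd n (2 * k) (coord n f t) ks = 0"
      unfolding cocycles_iff[OF n0] by auto
    define C where "C t = (SOME c. cob n (2 * k) (\<lambda>ks. coord n f t ks - c * upow n k ks))" for t
    have C: "cob n (2 * k) (\<lambda>ks. coord n f t ks - C t * upow n k ks)" if t: "t < n" for t
      unfolding C_def by (rule someI_ex) (rule Zeven_all[OF n1 nz coord_gC[OF f] cy[OF t]])
    define c' where "c' t = (-1) ^ k * C t" for t
    have sq: "(-1::'r) ^ k * (-1) ^ k = 1" by (simp add: power_add[symmetric])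
    have co: "coord n (cminus f (lincomb n k c')) t ks = coord n f t ks - C t * upow n k ks" if t: "t < n" for t ks
    proof -
      have "coord n (cminus f (lincomb n k c')) t ks = coord n f t ks - c' t * ((-1) ^ k * upow n k ks)"
        by (simp add: coord_cminus coord_lincomb[OF t])
      also have "c' t * ((-1) ^ k * upow n k ks) = ((-1) ^ k * (-1) ^ k) * C t * upow n k ks"
        by (simp add: c'_def algebra_simps)
      finally show ?thesis using sq by simp
    qed
    have ga: "gring_all n (cminus f (lincomb n k c'))"
      by (rule cminus_gring_all[OF cochains_gring_all[OF f] lincomb_gring_all[OF n0]])
    show "\<exists>c. cminus f (lincomb n k c) \<in> coboundaries n (2 * k)"
    proof (cases "k = 0")
      case True
      have "cminus f (lincomb n k c') = (\<lambda>_ _. 0)"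
      proof (rule zero_from_coords[OF n0 ga])
        fix t ks assume t: "t < n"
        show "coord n (cminus f (lincomb n k c')) t ks = 0"
          using C[OF t] True co[OF t] by (simp add: cob_def)
      qed
      then show ?thesis using True cob0 by auto
    next
      case False
      have "cminus f (lincomb n k c') \<in> coboundaries n (2 * k)"
      proof (rule cob_from_coords[OF n0 _ ga])
        show "1 \<le> 2 * k" using False by simp
        fix t assume t: "t < n"
        show "\<exists>\<theta>\<in>gC n (2 * k - 1). \<forall>ks. coord n (cminus f (lincomb n k c')) t ks = gd n (2 * k - 1) \<theta> ks"
          using C[OF t] False co[OF t] by (simp add: cob_def)
      qed
      then show ?thesis by blast
    qed
  qed

  have P4: "\<forall>k (c :: nat \<Rightarrow> 'r). lincomb n k c \<in> coboundaries n (2 * k) \<longleftrightarrow>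
           (if k = 0 then (\<forall>i<n. c i = 0) else (\<forall>i<n. of_nat n dvd c i))"
  proof (intro allI)
    fix k and c :: "nat \<Rightarrow> 'r"
    show "lincomb n k c \<in> coboundaries n (2 * k) \<longleftrightarrow>
           (if k = 0 then (\<forall>i<n. c i = 0) else (\<forall>i<n. of_nat n dvd c i))"
    proof (cases k)
      case 0
      have "lincomb n 0 c = (\<lambda>_ _. 0) \<longleftrightarrow> (\<forall>i<n. c i = 0)"
      proof
        assume z: "lincomb n 0 c = (\<lambda>_ _. 0)"
        show "\<forall>i<n. c i = 0"
        proof (intro allI impI)
          fix i assume i: "i < n"
          have "coord n (lincomb n 0 c) i [] = c i" using coord_lincomb[OF i, of 0 c "[]"] by simp
          then show "c i = 0" using z by (simp add: coord_def)
        qed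
      next
        assume "\<forall>i<n. c i = 0"
        then show "lincomb n 0 c = (\<lambda>_ _. 0)" by (auto simp: lincomb_def fun_eq_iff)
      qed
      then show ?thesis using 0 by (simp add: coboundaries_def)
    next
      case (Suc k')
      have m: "2 * k - 1 = Suc (2 * k')" using Suc by simp
      have ga: "gring_all n (lincomb n k c)" by (rule lincomb_gring_all[OF n0])
      show ?thesis
      proof
        assume cb: "lincomb n k c \<in> coboundaries n (2 * k)"
        show "if k = 0 then (\<forall>i<n. c i = 0) else (\<forall>i<n. of_nat n dvd c i)"
        proof (cases "n = 1")
          case True then show ?thesis using Suc by simp
        next
          case False
          then have n2: "1 < n" using n1 by simp
          have "of_nat n dvd c t" if t: "t < n" for t
          proof -
            obtain \<theta> where th: "\<theta> \<in> gC n (Suc (2 * k'))" "\<forall>ks. coord n (lincomb n k c) t ks = gd n (Suc (2 * k')) \<theta> ks"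
              using coords_of_cob[OF n0 _ cb t] Suc m by auto
            have "((-1) ^ k * c t) * upow n (Suc k') ks = gd n (Suc (2 * k')) \<theta> ks" for ks
              using th(2) coord_lincomb[OF t, of k c ks] Suc by (simp add: algebra_simps)
            then have "of_nat n dvd ((-1) ^ k * c t)" by (rule Z6[OF n2 th(1)])
            then have "of_nat n dvd ((-1) ^ k * ((-1) ^ k * c t))" by (rule dvd_mult)
            then show ?thesis by (simp add: mult.assoc[symmetric] power_add[symmetric])
          qed
          then show ?thesis using Suc by simp
        qed
      next
        assume dv: "if k = 0 then (\<forall>i<n. c i = 0) else (\<forall>i<n. of_nat n dvd c i)"
        show "lincomb n k c \<in> coboundaries n (2 * k)"
        proof (rule cob_from_coords[OF n0 _ ga])
          show "1 \<le> 2 * k" using Suc by simp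
          fix t assume t: "t < n"
          obtain d where d: "c t = of_nat n * d" using dv Suc t by (auto elim!: dvdE)
          let ?th = "\<lambda>l. (d * (-1) ^ k) * tsum n (Suc (2 * k')) (upow n (Suc k')) l"
          have thC: "?th \<in> gC n (Suc (2 * k'))" by (rule gC_scale) (use nU_cob in blast)
          have "coord n (lincomb n k c) t ks = gd n (Suc (2 * k')) ?th ks" for ks
          proof -
            have "coord n (lincomb n k c) t ks = (d * (-1) ^ k) * (of_nat n * upow n (Suc k') ks)"
              using coord_lincomb[OF t, of k c ks] d Suc by (simp add: algebra_simps)
            also have "\<dots> = gd n (Suc (2 * k')) ?th ks"
              using conjunct1[OF nU_cob[of n k' ks, where 'r='r]] by (simp add: gd_scale)
            finally show ?thesis .
          qed
          then show "\<exists>\<theta>\<in>gC n (2 * k - 1). \<forall>ks. coord n (lincomb n k c) t ks = gd n (2 * k - 1) \<theta> ks"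
            using thC m by auto
        qed
      qed
    qed
  qed

  have P5: "\<forall>m. \<forall>f \<in> (cocycles n (Suc m) :: (nat list \<Rightarrow> nat \<Rightarrow> 'r) set).
           bv_delta n m f \<in> coboundaries n m"
  proof (intro allI ballI)
    fix m and f :: "nat list \<Rightarrow> nat \<Rightarrow> 'r"
    assume "f \<in> cocycles n (Suc m)"
    then have f: "f \<in> cochains n (Suc m)" and cy: "\<And>t ks. t < n \<Longrightarrow> gd n (Suc m) (coord n f t) ks = 0"
      unfolding cocycles_iff[OF n0] by auto
    have BV: "(m = 0 \<longrightarrow> (\<forall>ks. gdel n m t (coord n f t) ks = 0)) \<and>
         (1 \<le> m \<longrightarrow> (\<exists>\<theta> \<in> gC n (m - 1). \<forall>ks. gdel n m t (coord n f t) ks = gd n (m - 1) \<theta> ks))"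
      if t: "t < n" for t
      by (rule BV_group[OF n1 nz coord_gC[OF f] cy[OF t]])
    show "bv_delta n m f \<in> coboundaries n m"
    proof (cases "m = 0")
      case True
      have "bv_delta n m f = (\<lambda>_ _. 0)"
      proof (rule zero_from_coords[OF n0 bv_gring_all[OF n0]])
        fix t ks assume t: "t < n"
        show "coord n (bv_delta n m f) t ks = 0" using BV[OF t] True coord_bv[OF f t] by simp
      qed
      then show ?thesis using True by (simp add: coboundaries_def)
    next
      case False
      show ?thesis
      proof (rule cob_from_coords[OF n0 _ bv_gring_all[OF n0]])
        show "1 \<le> m" using False by simp
        fix t assume t: "t < n"
        show "\<exists>\<theta>\<in>gC n (m - 1). \<forall>ks. coord n (bv_delta n m f) t ks = gd n (m - 1) \<theta> ks"
          using BV[OF t] False coord_bv[OF f t] by simp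
      qed
    qed
  qed

  show ?thesis using P1 P2 P3 P4 P5 by blast
qed


end
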